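(* Let $\mathcal{A}_1,\dots,\mathcal{A}_k$ be affine arrangements in vector spaces $V_1,\dots,V_k$ such that each cone $\mathbf{c}\mathcal{A}_i$ is free. Then the cone $\mathbf{c}(\mathcal{A}_1\oplus\cdots\oplus\mathcal{A}_k)$ is free.
   Context: An affine arrangement $\mathcal{A}$ in $V$ is a finite set of affine hyperplanes $\{v:\alpha(v)=c\}$ ($\alpha\in V^*\setminus\{0\}$, $c$ a scalar). Its cone $\mathbf{c}\mathcal{A}$ is the central arrangement in $\mathbb{K}\times V$ (coordinates $(x_0,v)$) consisting of the hyperplanes $\{\alpha(v)-cx_0=0\}$ for each affine hyperplane $\{\alpha=c\}\in\mathcal{A}$, together with $\{x_0=0\}$. The direct sum $\mathcal{A}_1\oplus\cdots\oplus\mathcal{A}_k$ is the affine arrangement in $V_1\times\cdots\times V_k$ consisting of $V_1\times\cdots\times H\times\cdots\times V_k$ for $H\in\mathcal{A}_i$, $i=1,\dots,k$. A central arrangement is free if its module of logarithmic vector fields $D=\{\delta\in\mathrm{Der}:\delta(\alpha_H)\in\alpha_HS\ \forall H\}$ is a free module over the polynomial ring $S$. *)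

theory Defs
  imports Main "HOL-Library.Poly_Mapping"
begin

text \<open>The polynomial ring S = K[Y] for a finite variable set Y is the set of
  polynomials all of whose monomials only involve variables in Y.\<close>

type_synonym ('w, 'k) mpoly = "('w \<Rightarrow>\<^sub>0 nat) \<Rightarrow>\<^sub>0 'k"

definition poly_in :: "'w set \<Rightarrow> ('w, 'k::zero) mpoly \<Rightarrow> bool" where
  "poly_in Y p \<longleftrightarrow> (\<forall>m \<in> Poly_Mapping.keys p. Poly_Mapping.keys m \<subseteq> Y)"

definition const_poly :: "'k::zero \<Rightarrow> ('w, 'k) mpoly" where
  "const_poly c = Poly_Mapping.single 0 c"

definition lin_poly :: "'w set \<Rightarrow> ('w \<Rightarrow> 'k::comm_ring_1) \<Rightarrow> ('w, 'k) mpoly" where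
  "lin_poly Y a = (\<Sum>w\<in>Y. Poly_Mapping.single (Poly_Mapping.single w 1) (a w))"

text \<open>A derivation of S = K[Y] (an element of Der_K(S) = free S-module on the
  partial derivatives), given by its coefficients theta(x_w).\<close>
definition is_der :: "'w set \<Rightarrow> ('w \<Rightarrow> ('w, 'k::zero) mpoly) \<Rightarrow> bool" where
  "is_der Y \<theta> \<longleftrightarrow> (\<forall>w\<in>Y. poly_in Y (\<theta> w)) \<and> (\<forall>w. w \<notin> Y \<longrightarrow> \<theta> w = 0)"

definition der_apply :: "'w set \<Rightarrow> ('w \<Rightarrow> ('w, 'k::comm_ring_1) mpoly) \<Rightarrow> ('w \<Rightarrow> 'k) \<Rightarrow> ('w, 'k) mpoly" where
  "der_apply Y \<theta> a = (\<Sum>w\<in>Y. const_poly (a w) * \<theta> w)"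

text \<open>Module of logarithmic derivations D(A) of a central arrangement A in K^Y,
  each hyperplane given by a defining linear form a : 'w \<Rightarrow> 'k.\<close>
definition log_ders :: "'w set \<Rightarrow> ('w \<Rightarrow> 'k::comm_ring_1) set \<Rightarrow> ('w \<Rightarrow> ('w, 'k) mpoly) set" where
  "log_ders Y A = {\<theta>. is_der Y \<theta> \<and>
     (\<forall>a\<in>A. \<exists>q. poly_in Y q \<and> der_apply Y \<theta> a = lin_poly Y a * q)}"

definition free_arr :: "'w set \<Rightarrow> ('w \<Rightarrow> 'k::comm_ring_1) set \<Rightarrow> bool" where
  "free_arr Y A \<longleftrightarrow> (\<exists>B. finite B \<and> B \<subseteq> log_ders Y A \<and>
     (\<forall>\<theta>\<in>log_ders Y A. \<exists>!c. (\<forall>b\<in>B. poly_in Y (c b)) \<and> (\<forall>b. b \<notin> B \<longrightarrow> c b = 0) \<and>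
         \<theta> = (\<lambda>w. \<Sum>b\<in>B. c b * b w)))"

text \<open>Affine hyperplanes in V = K^X (X a finite coordinate set) are given by pairs
  (alpha, c) meaning {v. alpha(v) = c}, with alpha a nonzero linear form
  supported on X.\<close>
definition aff_hyp :: "'v set \<Rightarrow> ('v \<Rightarrow> 'k::zero) \<Rightarrow> 'k \<Rightarrow> bool" where
  "aff_hyp X \<alpha> c \<longleftrightarrow> (\<exists>v\<in>X. \<alpha> v \<noteq> 0) \<and> (\<forall>v. v \<notin> X \<longrightarrow> \<alpha> v = 0)"

definition aff_arr :: "'v set \<Rightarrow> (('v \<Rightarrow> 'k::zero) \<times> 'k) set \<Rightarrow> bool" where
  "aff_arr X A \<longleftrightarrow> finite A \<and> (\<forall>(\<alpha>, c)\<in>A. aff_hyp X \<alpha> c)"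

text \<open>Cone: coordinates of K x V are 'v option, None being x_0.\<close>
definition cone_vars :: "'v set \<Rightarrow> 'v option set" where
  "cone_vars X = insert None (Some ` X)"

definition cone :: "(('v \<Rightarrow> 'k::comm_ring_1) \<times> 'k) set \<Rightarrow> ('v option \<Rightarrow> 'k) set" where
  "cone A = insert (\<lambda>u. if u = None then 1 else 0)
     ((\<lambda>(\<alpha>, c). \<lambda>u. case u of None \<Rightarrow> - c | Some v \<Rightarrow> \<alpha> v) ` A)"

text \<open>Direct sum of A_0,...,A_{k-1} in V_0 x ... x V_{k-1}; coordinates (i, v).\<close>
definition dsum_vars :: "nat \<Rightarrow> (nat \<Rightarrow> 'v set) \<Rightarrow> (nat \<times> 'v) set" where
  "dsum_vars k X = {(i, v). i < k \<and> v \<in> X i}"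

definition dsum :: "nat \<Rightarrow> (nat \<Rightarrow> (('v \<Rightarrow> 'k::zero) \<times> 'k) set) \<Rightarrow> ((nat \<times> 'v \<Rightarrow> 'k) \<times> 'k) set" where
  "dsum k A = (\<Union>i<k. (\<lambda>(\<alpha>, c). (\<lambda>(j, v). if j = i then \<alpha> v else 0, c)) ` A i)"

end

theory Submission
  imports Defs
begin


lemma poly_expand:
  fixes p :: "'a \<Rightarrow>\<^sub>0 'b::comm_monoid_add"
  shows "p = (\<Sum>m\<in>Poly_Mapping.keys p. Poly_Mapping.single m (Poly_Mapping.lookup p m))"
proof (rule poly_mapping_eqI)
  fix n
  have "Poly_Mapping.lookup (\<Sum>m\<in>Poly_Mapping.keys p. Poly_Mapping.single m (Poly_Mapping.lookup p m)) n
     = (\<Sum>m\<in>Poly_Mapping.keys p. if m = n then Poly_Mapping.lookup p m else 0)"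
    by (simp add: lookup_sum lookup_single when_def)
  also have "\<dots> = Poly_Mapping.lookup p n"
    by (simp add: in_keys_iff)
  finally show "Poly_Mapping.lookup p n = Poly_Mapping.lookup (\<Sum>m\<in>Poly_Mapping.keys p. Poly_Mapping.single m (Poly_Mapping.lookup p m)) n" by simp
qed

lemma lookup_single_mult:
  fixes q :: "'a::cancel_comm_monoid_add \<Rightarrow>\<^sub>0 'b::comm_ring_1"
  shows "Poly_Mapping.lookup (Poly_Mapping.single e c * q) (e + n) = c * Poly_Mapping.lookup q n"
proof -
  have "Poly_Mapping.single e c * q = (\<Sum>m\<in>Poly_Mapping.keys q. Poly_Mapping.single e c * Poly_Mapping.single m (Poly_Mapping.lookup q m))"
    by (subst poly_expand[of q]) (simp add: sum_distrib_left)
  also have "\<dots> = (\<Sum>m\<in>Poly_Mapping.keys q. Poly_Mapping.single (e + m) (c * Poly_Mapping.lookup q m))"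
    by (simp add: mult_single)
  finally have "Poly_Mapping.lookup (Poly_Mapping.single e c * q) (e + n) = 
     (\<Sum>m\<in>Poly_Mapping.keys q. if m = n then c * Poly_Mapping.lookup q m else 0)"
    by (simp add: lookup_sum lookup_single when_def)
  also have "\<dots> = c * Poly_Mapping.lookup q n" by (simp add: in_keys_iff)
  finally show ?thesis .
qed

lemma lookup_single_mult_notin:
  fixes q :: "'a::cancel_comm_monoid_add \<Rightarrow>\<^sub>0 'b::comm_ring_1"
  assumes "\<And>x. n \<noteq> e + x"
  shows "Poly_Mapping.lookup (Poly_Mapping.single e c * q) n = 0"
proof -
  have "Poly_Mapping.single e c * q = (\<Sum>m\<in>Poly_Mapping.keys q. Poly_Mapping.single e c * Poly_Mapping.single m (Poly_Mapping.lookup q m))"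
    by (subst poly_expand[of q]) (simp add: sum_distrib_left)
  also have "\<dots> = (\<Sum>m\<in>Poly_Mapping.keys q. Poly_Mapping.single (e + m) (c * Poly_Mapping.lookup q m))"
    by (simp add: mult_single)
  moreover have "\<And>x. e + x \<noteq> n" using assms by metis
  ultimately show ?thesis
    by (simp add: lookup_sum lookup_single when_def)
qed

lemma single_mult_cancel:
  fixes q q' :: "'a::cancel_comm_monoid_add \<Rightarrow>\<^sub>0 'b::field"
  assumes "Poly_Mapping.single e 1 * q = Poly_Mapping.single e 1 * q'"
  shows "q = q'"
proof (rule poly_mapping_eqI)
  fix n
  have "Poly_Mapping.lookup (Poly_Mapping.single e 1 * q) (e + n) = Poly_Mapping.lookup (Poly_Mapping.single e 1 * q') (e + n)"
    using assms by simp
  then show "Poly_Mapping.lookup q n = Poly_Mapping.lookup q' n" by (simp add: lookup_single_mult)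
qed

definition push :: "('a \<Rightarrow> 'b) \<Rightarrow> ('a \<Rightarrow>\<^sub>0 'c::comm_monoid_add) \<Rightarrow> ('b \<Rightarrow>\<^sub>0 'c)" where
  "push f p = (\<Sum>m\<in>Poly_Mapping.keys p. Poly_Mapping.single (f m) (Poly_Mapping.lookup p m))"

lemma lookup_push:
  assumes "inj f"
  shows "Poly_Mapping.lookup (push f p) n = (if n \<in> range f then Poly_Mapping.lookup p (inv f n) else 0)"
proof -
  have "Poly_Mapping.lookup (push f p) n = (\<Sum>m\<in>Poly_Mapping.keys p. if f m = n then Poly_Mapping.lookup p m else 0)"
    by (simp add: push_def lookup_sum lookup_single when_def)
  also have "\<dots> = (\<Sum>m\<in>Poly_Mapping.keys p \<inter> {m. f m = n}. Poly_Mapping.lookup p m)"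
    by (simp add: sum.inter_restrict)
  also have "\<dots> = (if n \<in> range f then Poly_Mapping.lookup p (inv f n) else 0)"
  proof (cases "n \<in> range f")
    case True
    then obtain m where m: "n = f m" by auto
    have "Poly_Mapping.keys p \<inter> {m. f m = n} = (if m \<in> Poly_Mapping.keys p then {m} else {})"
      using assms m by (auto dest: injD)
    then show ?thesis using m assms True by (auto simp: in_keys_iff)
  next
    case False
    then have "Poly_Mapping.keys p \<inter> {m. f m = n} = {}" by auto
    then show ?thesis using False by simp
  qed
  finally show ?thesis .
qed

lemma lookup_push_f [simp]:
  assumes "inj f"
  shows "Poly_Mapping.lookup (push f p) (f m) = Poly_Mapping.lookup p m"
  using assms by (simp add: lookup_push)

lemma lookup_push_notin:
  assumes "inj f" "n \<notin> range f"
  shows "Poly_Mapping.lookup (push f p) n = 0"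
  using assms by (simp add: lookup_push)

lemma push_add: assumes "inj f" shows "push f (p + q) = push f p + push f q"
  by (rule poly_mapping_eqI) (simp add: lookup_push assms lookup_add)

lemma push_zero [simp]: "push f 0 = 0"
  by (simp add: push_def)

lemma push_minus: assumes "inj f" shows "push f (p - q) = push f p - push f q"
  by (rule poly_mapping_eqI) (simp add: lookup_push assms lookup_minus)

lemma push_sum: assumes "inj f" shows "push f (sum g A) = (\<Sum>a\<in>A. push f (g a))"
  by (induction A rule: infinite_finite_induct) (simp_all add: push_add assms)

lemma push_single [simp]: assumes "inj f" shows "push f (Poly_Mapping.single a c) = Poly_Mapping.single (f a) c"
proof (rule poly_mapping_eqI)
  fix n show "Poly_Mapping.lookup (push f (Poly_Mapping.single a c)) n = Poly_Mapping.lookup (Poly_Mapping.single (f a) c) n"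
  proof (cases "n \<in> range f")
    case True
    then obtain b where b: "n = f b" by auto
    have "(a = b) = (f a = f b)" using assms by (auto dest: injD)
    then show ?thesis using assms b by (simp add: lookup_single when_def)
  next
    case False
    then have "f a \<noteq> n" by auto
    then show ?thesis using assms False by (simp add: lookup_push_notin lookup_single when_def)
  qed
qed

lemma keys_push: assumes "inj f" shows "Poly_Mapping.keys (push f p) = f ` Poly_Mapping.keys p"
proof
  show "Poly_Mapping.keys (push f p) \<subseteq> f ` Poly_Mapping.keys p"
  proof
    fix n assume n: "n \<in> Poly_Mapping.keys (push f p)"
    then have "n \<in> range f" using lookup_push_notin[OF assms] by (metis in_keys_iff)
    then obtain m where m: "n = f m" by auto
    then show "n \<in> f ` Poly_Mapping.keys p" using n assms by (simp add: in_keys_iff)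
  qed
  show "f ` Poly_Mapping.keys p \<subseteq> Poly_Mapping.keys (push f p)"
    using assms by (auto simp: in_keys_iff)
qed

lemma inj_push: assumes "inj f" shows "inj (push f :: ('a \<Rightarrow>\<^sub>0 'c::comm_monoid_add) \<Rightarrow> _)"
proof (rule injI)
  fix p q :: "'a \<Rightarrow>\<^sub>0 'c" assume "push f p = push f q"
  then have "Poly_Mapping.lookup (push f p) (f m) = Poly_Mapping.lookup (push f q) (f m)" for m by simp
  then show "p = q" using assms by (intro poly_mapping_eqI) simp
qed

lemma push_mult:
  fixes p q :: "'a::comm_monoid_add \<Rightarrow>\<^sub>0 'c::comm_ring_1"
  assumes "inj f" and fadd: "\<And>a b. f (a + b) = f a + f b"
  shows "push f (p * q) = push f p * push f q"
proof -
  let ?P = "\<lambda>a. Poly_Mapping.single a (Poly_Mapping.lookup p a)"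
  let ?Q = "\<lambda>b. Poly_Mapping.single b (Poly_Mapping.lookup q b)"
  have "p * q = (\<Sum>a\<in>Poly_Mapping.keys p. ?P a) * (\<Sum>b\<in>Poly_Mapping.keys q. ?Q b)"
    using poly_expand[of p] poly_expand[of q] by simp
  also have "\<dots> = (\<Sum>a\<in>Poly_Mapping.keys p. \<Sum>b\<in>Poly_Mapping.keys q. ?P a * ?Q b)"
    by (subst sum_distrib_right) (simp only: sum_distrib_left)
  finally have pq: "p * q = (\<Sum>a\<in>Poly_Mapping.keys p. \<Sum>b\<in>Poly_Mapping.keys q. ?P a * ?Q b)" .
  have "push f (p * q) = (\<Sum>a\<in>Poly_Mapping.keys p. \<Sum>b\<in>Poly_Mapping.keys q. push f (?P a * ?Q b))"
    unfolding pq by (simp only: push_sum[OF assms(1)])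
  also have "\<dots> = (\<Sum>a\<in>Poly_Mapping.keys p. \<Sum>b\<in>Poly_Mapping.keys q. push f (?P a) * push f (?Q b))"
    by (intro sum.cong refl) (simp only: mult_single push_single[OF assms(1)] fadd)
  also have "\<dots> = (\<Sum>a\<in>Poly_Mapping.keys p. push f (?P a)) * (\<Sum>b\<in>Poly_Mapping.keys q. push f (?Q b))"
    by (subst sum_distrib_right) (simp only: sum_distrib_left)
  also have "\<dots> = push f p * push f q"
    by (simp only: push_single[OF assms(1)]) (simp only: push_def)
  finally show ?thesis .
qed

lemma push_one:
  fixes f :: "'a::comm_monoid_add \<Rightarrow> 'b::comm_monoid_add"
  assumes "inj f" "f 0 = 0"
  shows "push f (1 :: 'a \<Rightarrow>\<^sub>0 'c::comm_ring_1) = 1"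
proof -
  have "(1 :: 'a \<Rightarrow>\<^sub>0 'c) = Poly_Mapping.single 0 1" by simp
  then have "push f (1 :: 'a \<Rightarrow>\<^sub>0 'c) = Poly_Mapping.single (f 0) 1"
    using push_single[OF assms(1)] by metis
  then show ?thesis using assms(2) by simp
qed



lemma poly_in_zero [simp]: "poly_in Y 0"
  by (simp add: poly_in_def)

lemma poly_in_add: "poly_in Y p \<Longrightarrow> poly_in Y q \<Longrightarrow> poly_in Y (p + q)"
  unfolding poly_in_def
proof
  fix m assume "\<forall>m\<in>Poly_Mapping.keys p. Poly_Mapping.keys m \<subseteq> Y" "\<forall>m\<in>Poly_Mapping.keys q. Poly_Mapping.keys m \<subseteq> Y"
    "m \<in> Poly_Mapping.keys (p + q)"
  moreover have "m \<in> Poly_Mapping.keys p \<union> Poly_Mapping.keys q" using keys_add[of p q] \<open>m \<in> _\<close> by (rule subsetD)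
  ultimately show "Poly_Mapping.keys m \<subseteq> Y" by auto
qed

lemma poly_in_diff: "poly_in Y p \<Longrightarrow> poly_in Y q \<Longrightarrow> poly_in Y (p - q)"
  unfolding poly_in_def
proof
  fix m assume "\<forall>m\<in>Poly_Mapping.keys p. Poly_Mapping.keys m \<subseteq> Y" "\<forall>m\<in>Poly_Mapping.keys q. Poly_Mapping.keys m \<subseteq> Y"
    "m \<in> Poly_Mapping.keys (p - q)"
  moreover have "m \<in> Poly_Mapping.keys p \<union> Poly_Mapping.keys q" using keys_diff[of p q] \<open>m \<in> _\<close> by (rule subsetD)
  ultimately show "Poly_Mapping.keys m \<subseteq> Y" by auto
qed

lemma poly_in_uminus: "poly_in Y p \<Longrightarrow> poly_in Y (- p)"
  unfolding poly_in_def by simp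

lemma poly_in_single: "Poly_Mapping.keys m \<subseteq> Y \<Longrightarrow> poly_in Y (Poly_Mapping.single m c)"
  unfolding poly_in_def by simp

lemma poly_in_mult:
  fixes p q :: "('w, 'k::comm_ring_1) mpoly"
  shows "poly_in Y p \<Longrightarrow> poly_in Y q \<Longrightarrow> poly_in Y (p * q)"
  unfolding poly_in_def
proof
  fix m assume p: "\<forall>m\<in>Poly_Mapping.keys p. Poly_Mapping.keys m \<subseteq> Y"
    and q: "\<forall>m\<in>Poly_Mapping.keys q. Poly_Mapping.keys m \<subseteq> Y"
    and m: "m \<in> Poly_Mapping.keys (p * q)"
  have "m \<in> {a + b |a b. a \<in> Poly_Mapping.keys p \<and> b \<in> Poly_Mapping.keys q}"
    using keys_mult[of p q] m by (rule subsetD)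
  then obtain a b where ab: "m = a + b" "a \<in> Poly_Mapping.keys p" "b \<in> Poly_Mapping.keys q"
    by blast
  have "Poly_Mapping.keys m \<subseteq> Poly_Mapping.keys a \<union> Poly_Mapping.keys b" using ab(1) keys_add[of a b] by simp
  moreover have "Poly_Mapping.keys a \<subseteq> Y" "Poly_Mapping.keys b \<subseteq> Y" using ab p q by auto
  ultimately show "Poly_Mapping.keys m \<subseteq> Y" by blast
qed

lemma poly_in_sum: "(\<And>i. i \<in> I \<Longrightarrow> poly_in Y (f i)) \<Longrightarrow> poly_in Y (sum f I)"
  by (induction I rule: infinite_finite_induct) (auto intro: poly_in_add)

lemma poly_in_const [simp]: "poly_in Y (const_poly c)"
  unfolding const_poly_def by (rule poly_in_single) simp

lemma poly_in_one [simp]: "poly_in Y (1 :: ('w, 'k::comm_ring_1) mpoly)"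
  using poly_in_const[of Y "1::'k"] by (simp add: const_poly_def)

lemma poly_in_mono: "poly_in Y p \<Longrightarrow> Y \<subseteq> Z \<Longrightarrow> poly_in Z p"
  unfolding poly_in_def by blast

lemma const_poly_0 [simp]: "const_poly 0 = 0" by (simp add: const_poly_def)
lemma const_poly_1 [simp]: "const_poly (1::'k::comm_ring_1) = (1 :: ('w,'k) mpoly)" by (simp add: const_poly_def)
lemma const_poly_add: "const_poly (a + b) = const_poly a + (const_poly b :: ('w,'k::comm_ring_1) mpoly)"
  by (simp add: const_poly_def single_add)
lemma const_poly_uminus: "const_poly (- a) = - (const_poly a :: ('w,'k::comm_ring_1) mpoly)"
  by (simp add: const_poly_def single_uminus)
lemma const_poly_mult_single:
  "const_poly a * Poly_Mapping.single m b = (Poly_Mapping.single m (a * b) :: ('w,'k::comm_ring_1) mpoly)"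
  by (simp add: const_poly_def mult_single)

definition var :: "'w \<Rightarrow> ('w, 'k::comm_ring_1) mpoly" where
  "var w = Poly_Mapping.single (Poly_Mapping.single w 1) 1"

lemma poly_in_var: "w \<in> Y \<Longrightarrow> poly_in Y (var w)"
  unfolding var_def by (rule poly_in_single) simp

lemma const_poly_mult_var: "const_poly a * var w = Poly_Mapping.single (Poly_Mapping.single w 1) a"
  by (simp add: var_def const_poly_mult_single)

lemma lin_poly_supp:
  assumes "finite Y" "Z \<subseteq> Y" "\<And>w. w \<in> Y \<Longrightarrow> w \<notin> Z \<Longrightarrow> a w = 0"
  shows "lin_poly Y a = (\<Sum>w\<in>Z. const_poly (a w) * var w)"
proof -
  have "lin_poly Y a = (\<Sum>w\<in>Y. const_poly (a w) * var w)"
    unfolding lin_poly_def by (simp add: const_poly_mult_var)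
  also have "\<dots> = (\<Sum>w\<in>Z. const_poly (a w) * var w)"
    using assms by (intro sum.mono_neutral_right) auto
  finally show ?thesis .
qed

lemma der_apply_supp:
  assumes "finite Y" "Z \<subseteq> Y" "\<And>w. w \<in> Y \<Longrightarrow> w \<notin> Z \<Longrightarrow> a w = 0"
  shows "der_apply Y \<theta> a = (\<Sum>w\<in>Z. const_poly (a w) * \<theta> w)"
  unfolding der_apply_def using assms by (intro sum.mono_neutral_right) auto

definition x0form :: "'w option \<Rightarrow> 'k::comm_ring_1" where
  "x0form = (\<lambda>u. if u = None then 1 else 0)"

lemma lin_poly_x0:
  assumes "finite Y" "None \<in> Y"
  shows "lin_poly Y (x0form :: _ \<Rightarrow> 'k::comm_ring_1) = var None"
proof -
  have "lin_poly Y (x0form :: _ \<Rightarrow> 'k) = (\<Sum>w\<in>{None}. const_poly (x0form w) * var w)"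
    by (rule lin_poly_supp) (use assms in \<open>auto simp: x0form_def\<close>)
  then show ?thesis by (simp add: x0form_def)
qed

lemma der_apply_x0:
  assumes "finite Y" "None \<in> Y"
  shows "der_apply Y \<theta> (x0form :: _ \<Rightarrow> 'k::comm_ring_1) = \<theta> None"
proof -
  have "der_apply Y \<theta> (x0form :: _ \<Rightarrow> 'k) = (\<Sum>w\<in>{None}. const_poly (x0form w) * \<theta> w)"
    by (rule der_apply_supp) (use assms in \<open>auto simp: x0form_def\<close>)
  then show ?thesis by (simp add: x0form_def)
qed

lemma der_apply_add:
  "der_apply Y (\<lambda>w. \<theta> w + \<eta> w) a = der_apply Y \<theta> a + der_apply Y \<eta> a"
  unfolding der_apply_def by (simp add: distrib_left sum.distrib)

lemma der_apply_smult:
  "der_apply Y (\<lambda>w. s * \<theta> w) a = s * der_apply Y \<theta> a"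
  unfolding der_apply_def by (simp add: sum_distrib_left mult.left_commute)

lemma der_apply_zero [simp]:
  "der_apply Y (\<lambda>w. 0) a = 0"
  unfolding der_apply_def by simp

lemma der_apply_sum:
  "der_apply Y (\<lambda>w. \<Sum>i\<in>I. c i * g i w) a = (\<Sum>i\<in>I. c i * der_apply Y (g i) a)"
proof (induction I rule: infinite_finite_induct)
  case (insert x F)
  have "der_apply Y (\<lambda>w. \<Sum>i\<in>insert x F. c i * g i w) a
      = der_apply Y (\<lambda>w. c x * g x w + (\<Sum>i\<in>F. c i * g i w)) a"
    using insert by simp
  also have "\<dots> = c x * der_apply Y (g x) a + der_apply Y (\<lambda>w. \<Sum>i\<in>F. c i * g i w) a"
    by (simp add: der_apply_add der_apply_smult)
  finally show ?case using insert by simp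
qed simp_all

section \<open>Restricted modules of logarithmic derivations\<close>

definition LD :: "'w set \<Rightarrow> 'w set \<Rightarrow> ('w \<Rightarrow> 'k::comm_ring_1) set \<Rightarrow> ('w \<Rightarrow> ('w, 'k) mpoly) set" where
  "LD Y Z A = {\<theta>. is_der Y \<theta> \<and> (\<forall>w. w \<notin> Z \<longrightarrow> \<theta> w = 0) \<and>
     (\<forall>a\<in>A. \<exists>q. poly_in Y q \<and> der_apply Y \<theta> a = lin_poly Y a * q)}"

lemma log_ders_LD: "log_ders Y A = LD Y Y A"
  unfolding log_ders_def LD_def is_der_def by auto

lemma LD_zero: "(\<lambda>w. 0) \<in> LD Y Z A"
  unfolding LD_def is_der_def by (auto intro: exI[of _ 0])

lemma LD_add:
  assumes "\<theta> \<in> LD Y Z A" "\<eta> \<in> LD Y Z A"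
  shows "(\<lambda>w. \<theta> w + \<eta> w) \<in> LD Y Z A"
  unfolding LD_def
proof (intro CollectI conjI ballI allI impI)
  show "is_der Y (\<lambda>w. \<theta> w + \<eta> w)" using assms unfolding LD_def is_der_def by (auto intro: poly_in_add)
  show "w \<notin> Z \<Longrightarrow> \<theta> w + \<eta> w = 0" for w using assms unfolding LD_def by auto
  fix a assume a: "a \<in> A"
  obtain q1 where q1: "poly_in Y q1" "der_apply Y \<theta> a = lin_poly Y a * q1" using assms(1) a unfolding LD_def by auto
  obtain q2 where q2: "poly_in Y q2" "der_apply Y \<eta> a = lin_poly Y a * q2" using assms(2) a unfolding LD_def by auto
  show "\<exists>q. poly_in Y q \<and> der_apply Y (\<lambda>w. \<theta> w + \<eta> w) a = lin_poly Y a * q"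
    by (rule exI[of _ "q1 + q2"]) (simp add: q1 q2 poly_in_add der_apply_add distrib_left)
qed

lemma LD_smult:
  assumes "\<theta> \<in> LD Y Z A" "poly_in Y s"
  shows "(\<lambda>w. s * \<theta> w) \<in> LD Y Z A"
  unfolding LD_def
proof (intro CollectI conjI ballI allI impI)
  show "is_der Y (\<lambda>w. s * \<theta> w)" using assms unfolding LD_def is_der_def by (auto intro: poly_in_mult)
  show "w \<notin> Z \<Longrightarrow> s * \<theta> w = 0" for w using assms unfolding LD_def by auto
  fix a assume a: "a \<in> A"
  obtain q1 where q1: "poly_in Y q1" "der_apply Y \<theta> a = lin_poly Y a * q1" using assms(1) a unfolding LD_def by auto
  show "\<exists>q. poly_in Y q \<and> der_apply Y (\<lambda>w. s * \<theta> w) a = lin_poly Y a * q"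
    by (rule exI[of _ "s * q1"]) (simp add: q1 assms(2) poly_in_mult der_apply_smult mult.left_commute)
qed

lemma LD_sum:
  assumes "\<And>i. i \<in> I \<Longrightarrow> g i \<in> LD Y Z A" "\<And>i. i \<in> I \<Longrightarrow> poly_in Y (c i)"
  shows "(\<lambda>w. \<Sum>i\<in>I. c i * g i w) \<in> LD Y Z A"
  using assms
proof (induction I rule: infinite_finite_induct)
  case (infinite I) then show ?case using LD_zero by simp
next
  case empty then show ?case using LD_zero by simp
next
  case (insert x F)
  have "(\<lambda>w. c x * g x w + (\<Sum>i\<in>F. c i * g i w)) \<in> LD Y Z A"
    using insert by (intro LD_add LD_smult) auto
  then show ?case using insert by simp
qed

lemma LD_diff:
  assumes "\<theta> \<in> LD Y Z A" "\<eta> \<in> LD Y Z A"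
  shows "(\<lambda>w. \<theta> w - \<eta> w) \<in> LD Y Z A"
proof -
  have "(\<lambda>w. \<theta> w + (-1) * \<eta> w) \<in> LD Y Z A"
    using assms by (intro LD_add LD_smult) (auto intro: poly_in_uminus)
  then show ?thesis by simp
qed

section \<open>Free modules\<close>

definition free_mod :: "'w set \<Rightarrow> ('w \<Rightarrow> ('w, 'k::comm_ring_1) mpoly) set \<Rightarrow> bool" where
  "free_mod Y M \<longleftrightarrow> (\<exists>B. finite B \<and> B \<subseteq> M \<and>
     (\<forall>\<theta>\<in>M. \<exists>!c. (\<forall>b\<in>B. poly_in Y (c b)) \<and> (\<forall>b. b \<notin> B \<longrightarrow> c b = 0) \<and>
         \<theta> = (\<lambda>w. \<Sum>b\<in>B. c b * b w)))"

lemma free_arr_free_mod: "free_arr Y A = free_mod Y (log_ders Y A)"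
  unfolding free_arr_def free_mod_def ..

lemma free_mod_idx:
  fixes g :: "'i \<Rightarrow> 'w \<Rightarrow> ('w, 'k::field) mpoly"
  assumes fin: "finite I" and gM: "\<And>i. i \<in> I \<Longrightarrow> g i \<in> M"
    and ex: "\<And>\<theta>. \<theta> \<in> M \<Longrightarrow> \<exists>a. (\<forall>i\<in>I. poly_in Y (a i)) \<and> \<theta> = (\<lambda>w. \<Sum>i\<in>I. a i * g i w)"
    and un: "\<And>a. (\<forall>i\<in>I. poly_in Y (a i)) \<Longrightarrow> (\<forall>w. (\<Sum>i\<in>I. a i * g i w) = 0) \<Longrightarrow> \<forall>i\<in>I. a i = 0"
  shows "free_mod Y M"
proof -
  have inj: "inj_on g I"
  proof (rule inj_onI)
    fix i j assume ij: "i \<in> I" "j \<in> I" "g i = g j"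
    show "i = j"
    proof (rule ccontr)
      assume "i \<noteq> j"
      define a where "a = (\<lambda>x. if x = i then 1 else if x = j then -1 else (0::('w,'k) mpoly))"
      have "(\<Sum>x\<in>I. a x * g x w) = 0" for w
      proof -
        have "(\<Sum>x\<in>I. a x * g x w) = (\<Sum>x\<in>{i,j}. a x * g x w)"
          using ij fin by (intro sum.mono_neutral_right) (auto simp: a_def)
        also have "\<dots> = 0" using \<open>i \<noteq> j\<close> ij by (simp add: a_def)
        finally show ?thesis .
      qed
      moreover have "\<forall>x\<in>I. poly_in Y (a x)" by (auto simp: a_def intro: poly_in_uminus)
      ultimately have "a i = 0" using un ij by blast
      then show False by (simp add: a_def)
    qed
  qed
  let ?B = "g ` I"
  show ?thesis unfolding free_mod_def
  proof (intro exI[of _ ?B] conjI ballI)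
    show "finite ?B" using fin by simp
    show "?B \<subseteq> M" using gM by auto
    fix \<theta> assume th: "\<theta> \<in> M"
    obtain a where a: "\<forall>i\<in>I. poly_in Y (a i)" "\<theta> = (\<lambda>w. \<Sum>i\<in>I. a i * g i w)" using ex[OF th] by blast
    define c where "c = (\<lambda>b. if b \<in> ?B then a (the_inv_into I g b) else 0)"
    have cg: "c (g i) = a i" if "i \<in> I" for i
      using that inj by (simp add: c_def the_inv_into_f_f)
    have rep: "(\<lambda>w. \<Sum>b\<in>?B. c' b * b w) = (\<lambda>w. \<Sum>i\<in>I. c' (g i) * g i w)" for c'
      using inj by (simp add: sum.reindex)
    show "\<exists>!c. (\<forall>b\<in>?B. poly_in Y (c b)) \<and> (\<forall>b. b \<notin> ?B \<longrightarrow> c b = 0) \<and> \<theta> = (\<lambda>w. \<Sum>b\<in>?B. c b * b w)"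
    proof (rule ex1I[of _ c])
      show "(\<forall>b\<in>?B. poly_in Y (c b)) \<and> (\<forall>b. b \<notin> ?B \<longrightarrow> c b = 0) \<and> \<theta> = (\<lambda>w. \<Sum>b\<in>?B. c b * b w)"
        using a cg by (auto simp: rep c_def intro!: sum.cong)
    next
      fix c' assume c': "(\<forall>b\<in>?B. poly_in Y (c' b)) \<and> (\<forall>b. b \<notin> ?B \<longrightarrow> c' b = 0) \<and> \<theta> = (\<lambda>w. \<Sum>b\<in>?B. c' b * b w)"
      define d where "d = (\<lambda>i. c' (g i) - a i)"
      have "\<forall>i\<in>I. poly_in Y (d i)" using c' a by (auto simp: d_def intro: poly_in_diff)
      moreover have "\<forall>w. (\<Sum>i\<in>I. d i * g i w) = 0"
      proof
        fix w
        have "(\<Sum>i\<in>I. c' (g i) * g i w) = \<theta> w" using c' rep[of c'] by metis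
        moreover have "(\<Sum>i\<in>I. a i * g i w) = \<theta> w" using a by simp
        ultimately show "(\<Sum>i\<in>I. d i * g i w) = 0"
          by (simp add: d_def left_diff_distrib sum_subtractf)
      qed
      ultimately have "\<forall>i\<in>I. d i = 0" using un by blast
      then have "\<forall>i\<in>I. c' (g i) = c (g i)" using cg by (simp add: d_def)
      show "c' = c"
      proof
        fix b show "c' b = c b"
        proof (cases "b \<in> ?B")
          case True
          then obtain i where i: "i \<in> I" "b = g i" by auto
          then show ?thesis using \<open>\<forall>i\<in>I. c' (g i) = c (g i)\<close> by simp
        next
          case False
          then show ?thesis using c' by (simp add: c_def)
        qed
      qed
    qed
  qed
qed



definition phi :: "('w option \<Rightarrow> ('w option, 'k::comm_ring_1) mpoly) \<Rightarrow> ('w option, 'k) mpoly" where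
  "phi \<theta> = (THE g. \<theta> None = var None * g)"

lemma phi_eq:
  fixes \<theta> :: "'w option \<Rightarrow> ('w option, 'k::field) mpoly"
  assumes "\<theta> None = var None * g"
  shows "phi \<theta> = g"
  unfolding phi_def
proof (rule the_equality)
  show "\<theta> None = var None * g" by fact
  fix g' assume "\<theta> None = var None * g'"
  then have "Poly_Mapping.single (Poly_Mapping.single None 1) 1 * g' = Poly_Mapping.single (Poly_Mapping.single None 1) 1 * g"
    using assms by (simp add: var_def)
  then show "g' = g" by (rule single_mult_cancel)
qed

lemma var_nonzero: "var w \<noteq> (0 :: ('w, 'k::field) mpoly)"
  unfolding var_def by (metis lookup_single_eq lookup_zero one_neq_zero)

lemma LD_phi:
  fixes \<theta> :: "'w option \<Rightarrow> ('w option, 'k::field) mpoly"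
  assumes "\<theta> \<in> LD W Z A" "x0form \<in> A" "finite W" "None \<in> W"
  shows "\<theta> None = var None * phi \<theta>" "poly_in W (phi \<theta>)"
proof -
  obtain q where q: "poly_in W q" "der_apply W \<theta> x0form = lin_poly W x0form * q"
    using assms(1,2) unfolding LD_def by blast
  then have "\<theta> None = var None * q" using assms(3,4) by (simp add: der_apply_x0 lin_poly_x0)
  then show "\<theta> None = var None * phi \<theta>" "poly_in W (phi \<theta>)" using phi_eq q(1) by metis+
qed

lemma phi_lin:
  fixes g :: "'i \<Rightarrow> 'w option \<Rightarrow> ('w option, 'k::field) mpoly"
  assumes "\<And>i. i \<in> I \<Longrightarrow> g i None = var None * phi (g i)"
  shows "phi (\<lambda>w. \<Sum>i\<in>I. c i * g i w) = (\<Sum>i\<in>I. c i * phi (g i))"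
  by (rule phi_eq) (simp add: assms sum_distrib_left mult.left_commute)

definition eul :: "'w set \<Rightarrow> 'w \<Rightarrow> ('w, 'k::comm_ring_1) mpoly" where
  "eul Z = (\<lambda>w. if w \<in> Z then var w else 0)"

definition vanish :: "'w set \<Rightarrow> 'w set \<Rightarrow> ('w \<Rightarrow> 'k::zero) set \<Rightarrow> bool" where
  "vanish W Z A \<longleftrightarrow> (\<forall>a\<in>A. \<forall>w\<in>W. w \<notin> Z \<longrightarrow> a w = 0)"

lemma eul_LD:
  fixes A :: "('w \<Rightarrow> 'k::comm_ring_1) set"
  assumes "finite W" "Z \<subseteq> W" "vanish W Z A"
  shows "eul Z \<in> LD W Z A"
  unfolding LD_def
proof (intro CollectI conjI allI impI ballI)
  show "is_der W (eul Z)" using assms by (auto simp: is_der_def eul_def intro: poly_in_var)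
  show "w \<notin> Z \<Longrightarrow> eul Z w = 0" for w by (simp add: eul_def)
  fix a assume a: "a \<in> A"
  have "der_apply W (eul Z) a = (\<Sum>w\<in>Z. const_poly (a w) * eul Z w)"
    using assms a unfolding vanish_def by (intro der_apply_supp) auto
  also have "\<dots> = (\<Sum>w\<in>Z. const_poly (a w) * var w)" by (simp add: eul_def)
  also have "\<dots> = lin_poly W a"
    using assms a unfolding vanish_def by (intro lin_poly_supp[symmetric]) auto
  finally show "\<exists>q. poly_in W q \<and> der_apply W (eul Z) a = lin_poly W a * q"
    by (intro exI[of _ 1]) simp
qed

lemma phi_eul:
  assumes "None \<in> Z"
  shows "phi (eul Z :: _ \<Rightarrow> ('w option, 'k::field) mpoly) = 1"
  by (rule phi_eq) (simp add: eul_def assms)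

definition res :: "'w set \<Rightarrow> ('w \<Rightarrow> ('w, 'k::comm_ring_1) mpoly) \<Rightarrow> 'w \<Rightarrow> ('w, 'k) mpoly" where
  "res Z \<theta> = (\<lambda>w. if w \<in> Z then \<theta> w else 0)"

lemma der_apply_res:
  assumes "\<And>w. w \<in> Y \<Longrightarrow> w \<notin> Z \<Longrightarrow> a w = 0"
  shows "der_apply Y \<theta> a = der_apply Y (res Z \<theta>) a"
  unfolding der_apply_def res_def using assms by (intro sum.cong) auto

lemma LD_res:
  assumes "\<theta> \<in> LD W Z A" "vanish W Z1 A1" "A1 \<subseteq> A"
  shows "res Z1 \<theta> \<in> LD W Z1 A1"
  unfolding LD_def
proof (intro CollectI conjI allI impI ballI)
  show "is_der W (res Z1 \<theta>)" using assms(1) by (auto simp: LD_def is_der_def res_def)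
  show "w \<notin> Z1 \<Longrightarrow> res Z1 \<theta> w = 0" for w by (simp add: res_def)
  fix a assume a: "a \<in> A1"
  then obtain q where "poly_in W q" "der_apply W \<theta> a = lin_poly W a * q"
    using assms(1,3) unfolding LD_def by blast
  moreover have "der_apply W \<theta> a = der_apply W (res Z1 \<theta>) a"
    using assms(2) a unfolding vanish_def by (intro der_apply_res) auto
  ultimately show "\<exists>q. poly_in W q \<and> der_apply W (res Z1 \<theta>) a = lin_poly W a * q" by auto
qed

definition merge :: "'w set \<Rightarrow> ('w \<Rightarrow> ('w, 'k::comm_ring_1) mpoly) \<Rightarrow> ('w \<Rightarrow> ('w, 'k) mpoly) \<Rightarrow> 'w \<Rightarrow> ('w, 'k) mpoly" where
  "merge Z2 q f = (\<lambda>w. if w \<in> Z2 then f w else q w)"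

lemma LD_merge:
  assumes q: "q \<in> LD W Z1 A1" and f: "f \<in> LD W Z2 A2"
    and v1: "vanish W Z1 A1" and v2: "vanish W Z2 A2"
    and Z12: "Z1 \<inter> Z2 \<subseteq> {None}" and qf: "q None = f None"
  shows "merge Z2 q f \<in> LD W (Z1 \<union> Z2) (A1 \<union> A2)"
  unfolding LD_def
proof (intro CollectI conjI allI impI ballI)
  show "is_der W (merge Z2 q f)" using q f by (auto simp: LD_def is_der_def merge_def)
  show "w \<notin> Z1 \<union> Z2 \<Longrightarrow> merge Z2 q f w = 0" for w using q by (auto simp: LD_def merge_def)
  have r1: "res Z1 (merge Z2 q f) = q"
  proof
    fix w show "res Z1 (merge Z2 q f) w = q w"
      using q Z12 qf by (cases "w = None") (auto simp: res_def merge_def LD_def)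
  qed
  have r2: "res Z2 (merge Z2 q f) = f"
  proof
    fix w show "res Z2 (merge Z2 q f) w = f w"
      using f by (auto simp: res_def merge_def LD_def)
  qed
  fix a assume a: "a \<in> A1 \<union> A2"
  show "\<exists>r. poly_in W r \<and> der_apply W (merge Z2 q f) a = lin_poly W a * r"
  proof (cases "a \<in> A1")
    case True
    have "der_apply W (merge Z2 q f) a = der_apply W q a"
      using v1 True unfolding vanish_def by (subst der_apply_res[of W Z1]) (auto simp: r1)
    then show ?thesis using q True unfolding LD_def by auto
  next
    case False
    then have a2: "a \<in> A2" using a by auto
    have "der_apply W (merge Z2 q f) a = der_apply W f a"
      using v2 a2 unfolding vanish_def by (subst der_apply_res[of W Z2]) (auto simp: r2)
    then show ?thesis using f a2 unfolding LD_def by auto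
  qed
qed

lemma ex1_eq: "\<exists>!x. P x \<Longrightarrow> P a \<Longrightarrow> P b \<Longrightarrow> a = b" by blast

lemma free_mod_unique0:
  assumes B: "finite B" "B \<subseteq> M"
    and uq: "\<forall>\<theta>\<in>M. \<exists>!c. (\<forall>b\<in>B. poly_in Y (c b)) \<and> (\<forall>b. b \<notin> B \<longrightarrow> c b = 0) \<and> \<theta> = (\<lambda>w. \<Sum>b\<in>B. c b * b w)"
    and zero: "(\<lambda>w. 0) \<in> M"
    and c: "\<forall>b\<in>B. poly_in Y (c b)" "\<forall>w. (\<Sum>b\<in>B. c b * b w) = 0"
  shows "\<forall>b\<in>B. c b = 0"
proof -
  define c' where "c' = (\<lambda>b. if b \<in> B then c b else 0)"
  have P1: "(\<forall>b\<in>B. poly_in Y (c' b)) \<and> (\<forall>b. b \<notin> B \<longrightarrow> c' b = 0) \<and> (\<lambda>w. 0) = (\<lambda>w. \<Sum>b\<in>B. c' b * b w)"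
    using c by (auto simp: c'_def)
  have P2: "(\<forall>b\<in>B. poly_in Y ((\<lambda>_. 0) b)) \<and> (\<forall>b. b \<notin> B \<longrightarrow> (\<lambda>_. 0) b = 0) \<and> (\<lambda>w. 0) = (\<lambda>w. \<Sum>b\<in>B. (\<lambda>_. 0) b * b w)"
    by simp
  have u: "\<exists>!c. (\<forall>b\<in>B. poly_in Y (c b)) \<and> (\<forall>b. b \<notin> B \<longrightarrow> c b = 0) \<and> (\<lambda>w. 0) = (\<lambda>w. \<Sum>b\<in>B. c b * b w)"
    using uq zero by (rule bspec)
  have "c' = (\<lambda>_. 0)" using ex1_eq[OF u, of c' "\<lambda>_. 0"] P1 by simp
  then show ?thesis by (metis c'_def)
qed



lemma sum_aux1:
  fixes a x p :: "'i \<Rightarrow> 'r::comm_ring_1"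
  shows "(\<Sum>c\<in>C. a c * (x c + p c * r)) = (\<Sum>c\<in>C. a c * x c) + (\<Sum>c\<in>C. a c * p c) * r"
  by (simp add: distrib_left sum.distrib sum_distrib_right mult.assoc)

lemma sum_aux2:
  fixes a p :: "'i \<Rightarrow> 'r::comm_ring_1"
  shows "(\<Sum>c\<in>C. a c * (p c * r)) = (\<Sum>c\<in>C. a c * p c) * r"
  by (simp add: sum_distrib_right mult.assoc)

lemma free_mod_obtain:
  assumes "free_mod Y M"
  obtains B where "finite B" "B \<subseteq> M"
    "\<forall>\<theta>\<in>M. \<exists>!c. (\<forall>b\<in>B. poly_in Y (c b)) \<and> (\<forall>b. b \<notin> B \<longrightarrow> c b = 0) \<and> \<theta> = (\<lambda>w. \<Sum>b\<in>B. c b * b w)"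
  using assms unfolding free_mod_def by blast

lemma rep_obtain:
  assumes "\<forall>\<theta>\<in>M. \<exists>!c. P c \<theta>" "\<theta> \<in> M"
  obtains c where "P c \<theta>"
  using assms by blast

lemma step_free:
  fixes W Z1 Z2 :: "'w option set" and A1 A2 :: "('w option \<Rightarrow> 'k::field) set"
  assumes fin: "finite W" and Z1W: "Z1 \<subseteq> W" and Z2W: "Z2 \<subseteq> W"
    and N1: "None \<in> Z1" and N2: "None \<in> Z2" and Z12: "Z1 \<inter> Z2 \<subseteq> {None}"
    and x1: "x0form \<in> A1" and x2: "x0form \<in> A2"
    and v1: "vanish W Z1 A1" and v2: "vanish W Z2 A2"
    and F1: "free_mod W (LD W Z1 A1)" and F2: "free_mod W (LD W Z2 A2)"
  shows "free_mod W (LD W (Z1 \<union> Z2) (A1 \<union> A2))"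
proof -
  let ?Q = "LD W Z1 A1" and ?F = "LD W Z2 A2" and ?M = "LD W (Z1 \<union> Z2) (A1 \<union> A2)"
  have NW: "None \<in> W" using N1 Z1W by auto
  obtain C where C: "finite C" "C \<subseteq> ?Q"
    and uC: "\<forall>\<theta>\<in>?Q. \<exists>!c. (\<forall>b\<in>C. poly_in W (c b)) \<and> (\<forall>b. b \<notin> C \<longrightarrow> c b = 0) \<and> \<theta> = (\<lambda>w. \<Sum>b\<in>C. c b * b w)"
    using F1 by (rule free_mod_obtain)
  obtain B where B: "finite B" "B \<subseteq> ?F"
    and uB: "\<forall>\<theta>\<in>?F. \<exists>!c. (\<forall>b\<in>B. poly_in W (c b)) \<and> (\<forall>b. b \<notin> B \<longrightarrow> c b = 0) \<and> \<theta> = (\<lambda>w. \<Sum>b\<in>B. c b * b w)"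
    using F2 by (rule free_mod_obtain)
  define E where "E = (eul Z1 :: _ \<Rightarrow> ('w option, 'k) mpoly)"
  have EQ: "E \<in> ?Q" unfolding E_def using fin Z1W v1 by (rule eul_LD)
  have EN: "E None = var None" by (simp add: E_def eul_def N1)
  have phiQ: "\<theta> None = var None * phi \<theta>" "poly_in W (phi \<theta>)" if "\<theta> \<in> ?Q" for \<theta>
    using LD_phi[OF that x1 fin NW] by auto
  have phiF: "\<theta> None = var None * phi \<theta>" "poly_in W (phi \<theta>)" if "\<theta> \<in> ?F" for \<theta>
    using LD_phi[OF that x2 fin NW] by auto
  have phiM: "\<theta> None = var None * phi \<theta>" "poly_in W (phi \<theta>)" if "\<theta> \<in> ?M" for \<theta>
    using LD_phi[OF that _ fin NW] x1 by auto
  have zQ: "\<theta> w = 0" if "\<theta> \<in> ?Q" "w \<notin> Z1" for \<theta> w using that by (simp add: LD_def)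
  have zF: "\<theta> w = 0" if "\<theta> \<in> ?F" "w \<notin> Z2" for \<theta> w using that by (simp add: LD_def)
  have zM: "\<theta> w = 0" if "\<theta> \<in> ?M" "w \<notin> Z1 \<union> Z2" for \<theta> w using that unfolding LD_def by blast
  have "B \<noteq> {}"
  proof
    assume Be: "B = {}"
    have "eul Z2 \<in> ?F" using fin Z2W v2 by (rule eul_LD)
    then obtain c where "eul Z2 = (\<lambda>w. \<Sum>b\<in>B. c b * b w)" using uB by blast
    then have "eul Z2 None = (0 :: ('w option, 'k) mpoly)" using Be by simp
    moreover have "var None \<noteq> (0 :: ('w option, 'k) mpoly)" by (rule var_nonzero)
    ultimately show False using N2 by (simp add: eul_def)
  qed
  then obtain b1 where b1: "b1 \<in> B" by blast
  have b1F: "b1 \<in> ?F" using b1 B by auto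
  define g1 where "g1 c = merge Z2 (\<lambda>w. c w + phi c * ((phi b1 - 1) * E w)) (\<lambda>w. phi c * b1 w)" for c
  define g2 where "g2 b = merge Z2 (\<lambda>w. phi b * E w) b" for b
  define g where "g = case_sum g1 g2"
  define I where "I = Inl ` C \<union> Inr ` (B - {b1})"
  have finI: "finite I" unfolding I_def using B C by simp
  have split: "(\<Sum>i\<in>I. a i * g i w) = (\<Sum>c\<in>C. a (Inl c) * g1 c w) + (\<Sum>b\<in>B - {b1}. a (Inr b) * g2 b w)" for a w
  proof -
    have "(\<Sum>i\<in>I. a i * g i w) = (\<Sum>i\<in>Inl ` C. a i * g i w) + (\<Sum>i\<in>Inr ` (B - {b1}). a i * g i w)"
      unfolding I_def using B C by (intro sum.union_disjoint) auto
    also have "\<dots> = (\<Sum>c\<in>C. a (Inl c) * g1 c w) + (\<Sum>b\<in>B - {b1}. a (Inr b) * g2 b w)"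
      by (simp add: sum.reindex g_def)
    finally show ?thesis .
  qed
  have g1in: "(\<lambda>w. c w + phi c * ((phi b1 - 1) * E w)) w = (if w \<in> Z2 then phi c * b1 w else c w + phi c * ((phi b1 - 1) * E w))"
    if "w \<notin> Z2" for c w using that by simp
  have g1Z2: "g1 c w = phi c * b1 w" if "w \<in> Z2" for c w using that by (simp add: g1_def merge_def)
  have g1nZ2: "g1 c w = c w + phi c * ((phi b1 - 1) * E w)" if "w \<notin> Z2" for c w using that by (simp add: g1_def merge_def)
  have g2Z2: "g2 b w = b w" if "w \<in> Z2" for b w using that by (simp add: g2_def merge_def)
  have g2nZ2: "g2 b w = phi b * E w" if "w \<notin> Z2" for b w using that by (simp add: g2_def merge_def)
  show ?thesis
  proof (rule free_mod_idx[of I g ?M W])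
    show "finite I" by (rule finI)
  next
    fix i assume "i \<in> I"
    then consider (l) c where "c \<in> C" "i = Inl c" | (r) b where "b \<in> B" "i = Inr b" unfolding I_def by blast
    then show "g i \<in> ?M"
    proof cases
      case l
      have cQ: "c \<in> ?Q" using l C by auto
      have q: "(\<lambda>w. c w + phi c * ((phi b1 - 1) * E w)) \<in> ?Q"
        using cQ EQ phiQ(2)[OF cQ] phiF(2)[OF b1F]
        by (intro LD_add LD_smult) (auto intro: poly_in_diff)
      have f: "(\<lambda>w. phi c * b1 w) \<in> ?F" using b1F phiQ(2)[OF cQ] by (intro LD_smult)
      have "c None + phi c * ((phi b1 - 1) * E None) = phi c * b1 None"
        using phiQ(1)[OF cQ] phiF(1)[OF b1F] EN by (simp add: algebra_simps)
      then show ?thesis using LD_merge[OF q f v1 v2 Z12] l by (simp add: g_def g1_def)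
    next
      case r
      have bF: "b \<in> ?F" using r B by auto
      have q: "(\<lambda>w. phi b * E w) \<in> ?Q" using EQ phiF(2)[OF bF] by (intro LD_smult)
      have "phi b * E None = b None" using phiF(1)[OF bF] EN by (simp add: algebra_simps)
      then show ?thesis using LD_merge[OF q bF v1 v2 Z12] r by (simp add: g_def g2_def)
    qed
  next
    fix \<theta> assume th: "\<theta> \<in> ?M"
    let ?q = "res Z1 \<theta>" and ?f = "res Z2 \<theta>"
    have qQ: "?q \<in> ?Q" using th v1 by (rule LD_res) simp
    have fF: "?f \<in> ?F" using th v2 by (rule LD_res) simp
    obtain \<beta> where \<beta>: "\<forall>b\<in>B. poly_in W (\<beta> b)" "\<forall>b. b \<notin> B \<longrightarrow> \<beta> b = 0" "?f = (\<lambda>w. \<Sum>b\<in>B. \<beta> b * b w)"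
      using uB fF by (rule rep_obtain) blast
    have phif: "phi ?f = phi \<theta>"
      using phiM(1)[OF th] N2 by (intro phi_eq) (simp add: res_def)
    have phiq: "phi ?q = phi \<theta>"
      using phiM(1)[OF th] N1 by (intro phi_eq) (simp add: res_def)
    define x where "x = (\<lambda>w. ?q w - (phi ?f - \<beta> b1) * E w)"
    have xQ: "x \<in> ?Q" unfolding x_def using qQ EQ phiF(2)[OF fF] \<beta>(1) b1
      by (intro LD_diff LD_smult) (auto intro: poly_in_diff)
    obtain \<alpha> where \<alpha>: "\<forall>b\<in>C. poly_in W (\<alpha> b)" "\<forall>b. b \<notin> C \<longrightarrow> \<alpha> b = 0" "x = (\<lambda>w. \<Sum>b\<in>C. \<alpha> b * b w)"
      using uC xQ by (rule rep_obtain) blast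
    have K1: "(\<Sum>c\<in>C. \<alpha> c * phi c) = \<beta> b1"
    proof -
      have "phi x = (\<Sum>c\<in>C. \<alpha> c * phi c)"
        unfolding \<alpha>(3) using phiQ(1) C(2) by (intro phi_lin) auto
      moreover have "phi x = \<beta> b1"
      proof (rule phi_eq)
        have "x None = var None * phi \<theta> - (phi \<theta> - \<beta> b1) * var None"
          using phiM(1)[OF th] N1 EN phif by (simp add: x_def res_def)
        then show "x None = var None * \<beta> b1" by (simp add: algebra_simps)
      qed
      ultimately show ?thesis by simp
    qed
    have K2: "phi ?f = \<beta> b1 * phi b1 + (\<Sum>b\<in>B - {b1}. \<beta> b * phi b)"
    proof -
      have "phi ?f = (\<Sum>b\<in>B. \<beta> b * phi b)"
        apply (subst \<beta>(3)) using phiF(1) B(2) by (intro phi_lin) auto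
      also have "\<dots> = \<beta> b1 * phi b1 + (\<Sum>b\<in>B - {b1}. \<beta> b * phi b)"
        using B(1) b1 by (simp add: sum.remove)
      finally show ?thesis .
    qed
    show "\<exists>a. (\<forall>i\<in>I. poly_in W (a i)) \<and> \<theta> = (\<lambda>w. \<Sum>i\<in>I. a i * g i w)"
    proof (intro exI[of _ "case_sum \<alpha> \<beta>"] conjI)
      show "\<forall>i\<in>I. poly_in W (case_sum \<alpha> \<beta> i)" using \<alpha>(1) \<beta>(1) by (auto simp: I_def)
      show "\<theta> = (\<lambda>w. \<Sum>i\<in>I. case_sum \<alpha> \<beta> i * g i w)"
      proof
        fix w
        have S: "(\<Sum>i\<in>I. case_sum \<alpha> \<beta> i * g i w) = (\<Sum>c\<in>C. \<alpha> c * g1 c w) + (\<Sum>b\<in>B - {b1}. \<beta> b * g2 b w)"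
          using split[of "case_sum \<alpha> \<beta>" w] by simp
        show "\<theta> w = (\<Sum>i\<in>I. case_sum \<alpha> \<beta> i * g i w)"
        proof (cases "w \<in> Z2")
          case True
          have "(\<Sum>c\<in>C. \<alpha> c * g1 c w) + (\<Sum>b\<in>B - {b1}. \<beta> b * g2 b w)
              = (\<Sum>c\<in>C. \<alpha> c * (phi c * b1 w)) + (\<Sum>b\<in>B - {b1}. \<beta> b * b w)"
            using True by (simp add: g1Z2 g2Z2)
          also have "\<dots> = \<beta> b1 * b1 w + (\<Sum>b\<in>B - {b1}. \<beta> b * b w)"
            by (simp only: sum_aux2 K1)
          also have "\<dots> = (\<Sum>b\<in>B. \<beta> b * b w)"
            using B(1) b1 by (simp add: sum.remove)
          also have "\<dots> = ?f w" using \<beta>(3) by metis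
          also have "\<dots> = \<theta> w" using True by (simp add: res_def)
          finally show ?thesis using S by simp
        next
          case False
          have "(\<Sum>c\<in>C. \<alpha> c * g1 c w) + (\<Sum>b\<in>B - {b1}. \<beta> b * g2 b w)
              = (\<Sum>c\<in>C. \<alpha> c * (c w + phi c * ((phi b1 - 1) * E w))) + (\<Sum>b\<in>B - {b1}. \<beta> b * (phi b * E w))"
            using False by (simp add: g1nZ2 g2nZ2)
          also have "\<dots> = (\<Sum>c\<in>C. \<alpha> c * c w) + \<beta> b1 * ((phi b1 - 1) * E w) + (\<Sum>b\<in>B - {b1}. \<beta> b * phi b) * E w"
            by (simp only: sum_aux1 sum_aux2 K1)
          also have "\<dots> = x w + (phi ?f - \<beta> b1) * E w"
            using \<alpha>(3) K2 by (simp add: algebra_simps)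
          also have "\<dots> = ?q w" by (simp add: x_def)
          also have "\<dots> = \<theta> w" using zM[OF th, of w] False by (simp add: res_def)
          finally show ?thesis using S by simp
        qed
      qed
    qed
  next
    fix a assume apoly: "\<forall>i\<in>I. poly_in W (a i)" and a0: "\<forall>w. (\<Sum>i\<in>I. a i * g i w) = 0"
    define s where "s = (\<Sum>c\<in>C. a (Inl c) * phi c)"
    define \<beta>' where "\<beta>' b = (if b = b1 then s else if b \<in> B then a (Inr b) else 0)" for b
    have "\<forall>b\<in>B. \<beta>' b = 0"
    proof (rule free_mod_unique0[OF B uB LD_zero])
      have pC: "poly_in W (a (Inl c))" if "c \<in> C" for c using apoly that by (auto simp: I_def)
      have "poly_in W s" unfolding s_def using pC phiQ(2) C(2)
        by (intro poly_in_sum poly_in_mult) auto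
      then show "\<forall>b\<in>B. poly_in W (\<beta>' b)" using apoly by (auto simp: \<beta>'_def I_def)
      show "\<forall>w. (\<Sum>b\<in>B. \<beta>' b * b w) = 0"
      proof
        fix w
        show "(\<Sum>b\<in>B. \<beta>' b * b w) = 0"
        proof (cases "w \<in> Z2")
          case True
          have "(\<Sum>b\<in>B. \<beta>' b * b w) = \<beta>' b1 * b1 w + (\<Sum>b\<in>B - {b1}. \<beta>' b * b w)"
            using B(1) b1 by (simp add: sum.remove)
          also have "\<dots> = s * b1 w + (\<Sum>b\<in>B - {b1}. a (Inr b) * b w)"
            by (simp add: \<beta>'_def)
          also have "\<dots> = (\<Sum>c\<in>C. a (Inl c) * g1 c w) + (\<Sum>b\<in>B - {b1}. a (Inr b) * g2 b w)"
            using True by (simp add: g1Z2 g2Z2 sum_aux2 s_def)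
          also have "\<dots> = 0" using a0 split by metis
          finally show ?thesis .
        next
          case False
          have "\<forall>b\<in>B. b w = 0" using False B(2) zF by blast
          then show ?thesis by (intro sum.neutral) (metis mult_zero_right)
        qed
      qed
    qed
    then have s0: "s = 0" and bz: "\<And>b. b \<in> B - {b1} \<Longrightarrow> a (Inr b) = 0"
      using b1 by (auto simp: \<beta>'_def split: if_splits)
    have "\<forall>c\<in>C. a (Inl c) = 0"
    proof (rule free_mod_unique0[OF C uC LD_zero])
      show "\<forall>c\<in>C. poly_in W (a (Inl c))" using apoly by (auto simp: I_def)
      show "\<forall>w. (\<Sum>c\<in>C. a (Inl c) * c w) = 0"
      proof
        fix w
        show "(\<Sum>c\<in>C. a (Inl c) * c w) = 0"
        proof (cases "w \<in> Z2")
          case False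
          have "(\<Sum>c\<in>C. a (Inl c) * g1 c w) + (\<Sum>b\<in>B - {b1}. a (Inr b) * g2 b w)
              = (\<Sum>c\<in>C. a (Inl c) * (c w + phi c * ((phi b1 - 1) * E w)))"
            using False bz by (simp add: g1nZ2)
          also have "\<dots> = (\<Sum>c\<in>C. a (Inl c) * c w)"
            by (simp only: sum_aux1 s_def[symmetric] s0) simp
          finally show ?thesis using a0 split by metis
        next
          case True
          show ?thesis
          proof (cases "w = None")
            case True
            have "(\<Sum>c\<in>C. a (Inl c) * c w) = (\<Sum>c\<in>C. a (Inl c) * (var None * phi c))"
              using True phiQ(1) C(2) by (intro sum.cong) auto
            also have "\<dots> = var None * s" by (simp add: s_def sum_distrib_left mult.left_commute)
            finally show ?thesis by (simp add: s0)
          next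
            case False
            then have "w \<notin> Z1" using True Z12 by auto
            then have "\<forall>c\<in>C. c w = 0" using zQ C(2) by blast
            then show ?thesis by (intro sum.neutral) (metis mult_zero_right)
          qed
        qed
      qed
    qed
    then show "\<forall>i\<in>I. a i = 0" using bz by (auto simp: I_def)
  qed
qed



locale renaming =
  fixes \<rho> :: "'u \<Rightarrow> 'w"
  assumes inj_rho: "inj \<rho>"
begin

definition mon :: "('u \<Rightarrow>\<^sub>0 nat) \<Rightarrow> ('w \<Rightarrow>\<^sub>0 nat)" where
  "mon = push \<rho>"

lemma inj_mon: "inj mon"
  unfolding mon_def by (rule inj_push[OF inj_rho])

lemma mon_add: "mon (a + b) = mon a + mon b"
  unfolding mon_def by (rule push_add[OF inj_rho])

lemma mon_zero [simp]: "mon 0 = 0"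
  unfolding mon_def by simp

lemma lookup_mon_rho [simp]: "Poly_Mapping.lookup (mon m) (\<rho> u) = Poly_Mapping.lookup m u"
  unfolding mon_def using inj_rho by simp

lemma lookup_mon_notin: "w \<notin> range \<rho> \<Longrightarrow> Poly_Mapping.lookup (mon m) w = 0"
  unfolding mon_def using inj_rho by (rule lookup_push_notin)

lemma keys_mon: "Poly_Mapping.keys (mon m) = \<rho> ` Poly_Mapping.keys m"
  unfolding mon_def using inj_rho by (rule keys_push)

lemma mon_single: "mon (Poly_Mapping.single u n) = Poly_Mapping.single (\<rho> u) n"
  unfolding mon_def using inj_rho by simp

definition emb :: "('u, 'k::comm_ring_1) mpoly \<Rightarrow> ('w, 'k) mpoly" where
  "emb = push mon"

lemma emb_add: "emb (p + q) = emb p + emb q"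
  unfolding emb_def by (rule push_add[OF inj_mon])

lemma emb_diff: "emb (p - q) = emb p - emb q"
  unfolding emb_def by (rule push_minus[OF inj_mon])

lemma emb_zero [simp]: "emb 0 = 0"
  unfolding emb_def by simp

lemma emb_sum: "emb (sum f A) = (\<Sum>a\<in>A. emb (f a))"
  unfolding emb_def by (rule push_sum[OF inj_mon])

lemma emb_mult: "emb (p * q) = emb p * emb q"
  unfolding emb_def by (rule push_mult[OF inj_mon mon_add])

lemma emb_single: "emb (Poly_Mapping.single m c) = Poly_Mapping.single (mon m) c"
  unfolding emb_def using inj_mon by simp

lemma emb_const: "emb (const_poly c) = const_poly c"
  unfolding const_poly_def by (simp add: emb_single)

lemma lookup_emb_mon [simp]: "Poly_Mapping.lookup (emb p) (mon m) = Poly_Mapping.lookup p m"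
  unfolding emb_def using inj_mon by simp

lemma lookup_emb_notin: "n \<notin> range mon \<Longrightarrow> Poly_Mapping.lookup (emb p) n = 0"
  unfolding emb_def using inj_mon by (rule lookup_push_notin)

lemma keys_emb: "Poly_Mapping.keys (emb p) = mon ` Poly_Mapping.keys p"
  unfolding emb_def using inj_mon by (rule keys_push)

lemma emb_var: "emb (var u) = var (\<rho> u)"
  unfolding var_def by (simp add: emb_single mon_single)

definition outer :: "('w \<Rightarrow>\<^sub>0 nat) \<Rightarrow> ('w \<Rightarrow>\<^sub>0 nat)" where
  "outer n = (\<Sum>w\<in>Poly_Mapping.keys n - range \<rho>. Poly_Mapping.single w (Poly_Mapping.lookup n w))"

lemma lookup_outer: "Poly_Mapping.lookup (outer n) w = (if w \<in> range \<rho> then 0 else Poly_Mapping.lookup n w)"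
proof -
  have "Poly_Mapping.lookup (outer n) w = (\<Sum>x\<in>Poly_Mapping.keys n - range \<rho>. if x = w then Poly_Mapping.lookup n x else 0)"
    by (simp add: outer_def lookup_sum lookup_single when_def)
  also have "\<dots> = (if w \<in> Poly_Mapping.keys n - range \<rho> then Poly_Mapping.lookup n w else 0)"
    by (simp add: sum.delta')
  also have "\<dots> = (if w \<in> range \<rho> then 0 else Poly_Mapping.lookup n w)"
    by (auto simp: in_keys_iff)
  finally show ?thesis .
qed

definition inner :: "('w \<Rightarrow>\<^sub>0 nat) \<Rightarrow> ('u \<Rightarrow>\<^sub>0 nat)" where
  "inner n = (\<Sum>u\<in>\<rho> -` Poly_Mapping.keys n. Poly_Mapping.single u (Poly_Mapping.lookup n (\<rho> u)))"

lemma lookup_inner: "Poly_Mapping.lookup (inner n) u = Poly_Mapping.lookup n (\<rho> u)"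
proof -
  have fin: "finite (\<rho> -` Poly_Mapping.keys n)"
    using inj_rho by (intro finite_vimageI) auto
  have "Poly_Mapping.lookup (inner n) u = (\<Sum>x\<in>\<rho> -` Poly_Mapping.keys n. if x = u then Poly_Mapping.lookup n (\<rho> x) else 0)"
    by (simp add: inner_def lookup_sum lookup_single when_def)
  also have "\<dots> = (if u \<in> \<rho> -` Poly_Mapping.keys n then Poly_Mapping.lookup n (\<rho> u) else 0)"
    using fin by (simp add: sum.delta')
  also have "\<dots> = Poly_Mapping.lookup n (\<rho> u)"
    by (auto simp: in_keys_iff)
  finally show ?thesis .
qed

lemma decomp: "n = outer n + mon (inner n)"
proof (rule poly_mapping_eqI)
  fix w
  show "Poly_Mapping.lookup n w = Poly_Mapping.lookup (outer n + mon (inner n)) w"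
  proof (cases "w \<in> range \<rho>")
    case True
    then obtain u where "w = \<rho> u" by auto
    then show ?thesis by (simp add: lookup_add lookup_outer lookup_inner)
  next
    case False
    then show ?thesis by (simp add: lookup_add lookup_outer lookup_mon_notin)
  qed
qed

definition OUT :: "('w \<Rightarrow>\<^sub>0 nat) set" where
  "OUT = {\<mu>. Poly_Mapping.keys \<mu> \<inter> range \<rho> = {}}"

lemma outer_OUT: "outer n \<in> OUT"
  unfolding OUT_def by (auto simp: in_keys_iff lookup_outer)

lemma keys_outer: "Poly_Mapping.keys (outer n) \<subseteq> Poly_Mapping.keys n"
  by (auto simp: in_keys_iff lookup_outer split: if_splits)

lemma outer_add: "outer (a + b) = outer a + outer b"
  by (rule poly_mapping_eqI) (simp add: lookup_outer lookup_add)

lemma inner_add: "inner (a + b) = inner a + inner b"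
  by (rule poly_mapping_eqI) (simp add: lookup_inner lookup_add)

lemma outer_mon [simp]: "outer (mon x) = 0"
proof (rule poly_mapping_eqI)
  fix w show "Poly_Mapping.lookup (outer (mon x)) w = Poly_Mapping.lookup 0 w"
    by (cases "w \<in> range \<rho>") (auto simp: lookup_outer lookup_mon_notin)
qed

lemma inner_mon [simp]: "inner (mon x) = x"
  by (rule poly_mapping_eqI) (simp add: lookup_inner)

lemma outer_OUT_id: "\<mu> \<in> OUT \<Longrightarrow> outer \<mu> = \<mu>"
  unfolding OUT_def
  by (intro poly_mapping_eqI) (auto simp: lookup_outer in_keys_iff)

lemma inner_OUT: "\<mu> \<in> OUT \<Longrightarrow> inner \<mu> = 0"
  unfolding OUT_def
  by (intro poly_mapping_eqI) (auto simp: lookup_inner in_keys_iff)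

lemma L1:
  fixes L :: "('u, 'k::comm_ring_1) mpoly"
  assumes "\<mu> \<in> OUT"
  shows "Poly_Mapping.lookup (Poly_Mapping.single \<mu> 1 * emb L) n = (if outer n = \<mu> then Poly_Mapping.lookup L (inner n) else 0)"
proof (cases "outer n = \<mu>")
  case True
  then have "n = \<mu> + mon (inner n)" using decomp[of n] by simp
  then have "Poly_Mapping.lookup (Poly_Mapping.single \<mu> 1 * emb L) n = 1 * Poly_Mapping.lookup (emb L) (mon (inner n))"
    by (metis lookup_single_mult)
  then show ?thesis using True by simp
next
  case False
  show ?thesis
  proof (cases "\<exists>x. n = \<mu> + x")
    case True
    then obtain x where x: "n = \<mu> + x" by blast
    have "x \<notin> range mon"
    proof
      assume "x \<in> range mon"
      then obtain y where "x = mon y" by auto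
      then have "outer n = \<mu>" using x outer_add outer_OUT_id[OF assms] by simp
      then show False using False by simp
    qed
    then show ?thesis using x False by (simp add: lookup_single_mult lookup_emb_notin)
  next
    case False2: False
    then have "\<And>x. n \<noteq> \<mu> + x" by blast
    then show ?thesis using False by (simp add: lookup_single_mult_notin)
  qed
qed

definition T :: "('w \<Rightarrow>\<^sub>0 nat) \<Rightarrow> ('w, 'k::comm_ring_1) mpoly \<Rightarrow> ('u, 'k) mpoly" where
  "T \<mu> p = (\<Sum>m\<in>(\<lambda>m. \<mu> + mon m) -` Poly_Mapping.keys p. Poly_Mapping.single m (Poly_Mapping.lookup p (\<mu> + mon m)))"

lemma lookup_T: "Poly_Mapping.lookup (T \<mu> p) m = Poly_Mapping.lookup p (\<mu> + mon m)"
proof -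
  have inj: "inj (\<lambda>m. \<mu> + mon m)" using inj_mon by (auto intro!: injI dest: injD)
  have fin: "finite ((\<lambda>m. \<mu> + mon m) -` Poly_Mapping.keys p)"
    using inj by (intro finite_vimageI) auto
  have "Poly_Mapping.lookup (T \<mu> p) m = (\<Sum>x\<in>(\<lambda>m. \<mu> + mon m) -` Poly_Mapping.keys p. if x = m then Poly_Mapping.lookup p (\<mu> + mon x) else 0)"
    by (simp add: T_def lookup_sum lookup_single when_def)
  also have "\<dots> = (if m \<in> (\<lambda>m. \<mu> + mon m) -` Poly_Mapping.keys p then Poly_Mapping.lookup p (\<mu> + mon m) else 0)"
    using fin by (simp add: sum.delta')
  also have "\<dots> = Poly_Mapping.lookup p (\<mu> + mon m)"
    by (auto simp: in_keys_iff)
  finally show ?thesis .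
qed

lemma T_add: "T \<mu> (p + q) = T \<mu> p + T \<mu> q"
  by (rule poly_mapping_eqI) (simp add: lookup_T lookup_add)

lemma T_zero [simp]: "T \<mu> 0 = 0"
  by (rule poly_mapping_eqI) (simp add: lookup_T)

lemma T_sum: "T \<mu> (sum f A) = (\<Sum>a\<in>A. T \<mu> (f a))"
  by (induction A rule: infinite_finite_induct) (simp_all add: T_add)

lemma T_single_mult:
  fixes q :: "('w, 'k::comm_ring_1) mpoly"
  assumes "\<mu> \<in> OUT"
  shows "T \<mu> (Poly_Mapping.single (mon a) c * q) = Poly_Mapping.single a c * T \<mu> q"
proof (rule poly_mapping_eqI)
  fix m
  show "Poly_Mapping.lookup (T \<mu> (Poly_Mapping.single (mon a) c * q)) m = Poly_Mapping.lookup (Poly_Mapping.single a c * T \<mu> q) m"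
  proof (cases "\<exists>m'. m = a + m'")
    case True
    then obtain m' where m': "m = a + m'" by blast
    have "\<mu> + mon m = mon a + (\<mu> + mon m')" using m' by (simp add: mon_add add_ac)
    then show ?thesis using m' by (simp add: lookup_T lookup_single_mult)
  next
    case False
    have "\<mu> + mon m \<noteq> mon a + x" for x
    proof
      assume "\<mu> + mon m = mon a + x"
      then have "inner (\<mu> + mon m) = inner (mon a + x)" by simp
      then have "m = a + inner x" using inner_OUT[OF assms] by (simp add: inner_add)
      then show False using False by blast
    qed
    then have "Poly_Mapping.lookup (Poly_Mapping.single (mon a) c * q) (\<mu> + mon m) = 0"
      by (intro lookup_single_mult_notin) blast
    moreover have "Poly_Mapping.lookup (Poly_Mapping.single a c * T \<mu> q) m = 0"
      using False by (intro lookup_single_mult_notin) blast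
    ultimately show ?thesis by (simp add: lookup_T)
  qed
qed

lemma T_emb_mult:
  fixes q :: "('w, 'k::comm_ring_1) mpoly"
  assumes "\<mu> \<in> OUT"
  shows "T \<mu> (emb l * q) = l * T \<mu> q"
proof -
  have "emb l * q = (\<Sum>a\<in>Poly_Mapping.keys l. Poly_Mapping.single (mon a) (Poly_Mapping.lookup l a) * q)"
    by (subst poly_expand[of l]) (simp only: emb_sum emb_single sum_distrib_right)
  then have "T \<mu> (emb l * q) = (\<Sum>a\<in>Poly_Mapping.keys l. Poly_Mapping.single a (Poly_Mapping.lookup l a) * T \<mu> q)"
    by (simp only: T_sum T_single_mult[OF assms])
  also have "\<dots> = l * T \<mu> q"
    by (subst (2) poly_expand[of l]) (simp only: sum_distrib_right)
  finally show ?thesis .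
qed

lemma T_mult_emb:
  fixes q :: "('w, 'k::comm_ring_1) mpoly"
  assumes "\<mu> \<in> OUT"
  shows "T \<mu> (q * emb l) = T \<mu> q * l"
  using T_emb_mult[OF assms] by (simp add: mult.commute)

lemma T_const_mult:
  fixes q :: "('w, 'k::comm_ring_1) mpoly"
  assumes "\<mu> \<in> OUT"
  shows "T \<mu> (const_poly c * q) = const_poly c * T \<mu> q"
  using T_emb_mult[OF assms, of "const_poly c"] by (simp add: emb_const)

lemma T_expand:
  fixes p :: "('w, 'k::comm_ring_1) mpoly"
  assumes U: "finite U" "U \<subseteq> OUT" "outer ` Poly_Mapping.keys p \<subseteq> U"
  shows "p = (\<Sum>\<mu>\<in>U. Poly_Mapping.single \<mu> 1 * emb (T \<mu> p))"
proof (rule poly_mapping_eqI)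
  fix n
  have "Poly_Mapping.lookup (\<Sum>\<mu>\<in>U. Poly_Mapping.single \<mu> 1 * emb (T \<mu> p)) n
      = (\<Sum>\<mu>\<in>U. if outer n = \<mu> then Poly_Mapping.lookup (T \<mu> p) (inner n) else 0)"
    unfolding lookup_sum using U(2) by (intro sum.cong refl) (simp add: L1 subset_iff)
  also have "\<dots> = (if outer n \<in> U then Poly_Mapping.lookup p n else 0)"
    using U(1) by (simp add: sum.delta lookup_T decomp[symmetric])
  also have "\<dots> = Poly_Mapping.lookup p n"
    using U(3) by (metis image_subset_iff in_keys_iff)
  finally show "Poly_Mapping.lookup p n = Poly_Mapping.lookup (\<Sum>\<mu>\<in>U. Poly_Mapping.single \<mu> 1 * emb (T \<mu> p)) n" by simp
qed

end



context renaming
begin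

lemma sum_rho: "(\<Sum>w\<in>\<rho> ` Yl. f w) = (\<Sum>u\<in>Yl. f (\<rho> u))"
  using sum.reindex[OF inj_on_subset[OF inj_rho subset_UNIV, of Yl]] by (simp only: comp_def)

lemma der_apply_corr:
  assumes finW: "finite W" and sub: "\<rho> ` Yl \<subseteq> W"
    and c: "\<forall>u\<in>Yl. a' (\<rho> u) = a u" and v: "\<forall>w\<in>W. w \<notin> \<rho> ` Yl \<longrightarrow> a' w = 0"
  shows "der_apply W \<theta> a' = (\<Sum>u\<in>Yl. const_poly (a u) * \<theta> (\<rho> u))"
proof -
  have "der_apply W \<theta> a' = (\<Sum>w\<in>\<rho> ` Yl. const_poly (a' w) * \<theta> w)"
    using finW sub v by (intro der_apply_supp) auto
  also have "\<dots> = (\<Sum>u\<in>Yl. const_poly (a' (\<rho> u)) * \<theta> (\<rho> u))"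
    by (rule sum_rho)
  also have "\<dots> = (\<Sum>u\<in>Yl. const_poly (a u) * \<theta> (\<rho> u))"
    using c by simp
  finally show ?thesis .
qed

lemma lin_poly_corr:
  fixes a :: "'u \<Rightarrow> 'k::comm_ring_1"
  assumes finW: "finite W" and sub: "\<rho> ` Yl \<subseteq> W"
    and c: "\<forall>u\<in>Yl. a' (\<rho> u) = a u" and v: "\<forall>w\<in>W. w \<notin> \<rho> ` Yl \<longrightarrow> a' w = 0"
  shows "lin_poly W a' = emb (lin_poly Yl a)"
proof -
  have "lin_poly W a' = (\<Sum>w\<in>\<rho> ` Yl. const_poly (a' w) * var w)"
    using finW sub v by (intro lin_poly_supp) auto
  also have "\<dots> = (\<Sum>u\<in>Yl. const_poly (a' (\<rho> u)) * var (\<rho> u))"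
    by (rule sum_rho)
  also have "\<dots> = (\<Sum>u\<in>Yl. const_poly (a u) * var (\<rho> u))"
    using c by simp
  also have "\<dots> = emb (lin_poly Yl a)"
    unfolding lin_poly_def by (simp add: emb_sum emb_single mon_single const_poly_mult_var)
  finally show ?thesis .
qed

lemma poly_in_emb:
  assumes "poly_in Yl p"
  shows "poly_in (\<rho> ` Yl) (emb p)"
  unfolding poly_in_def
proof
  fix n assume "n \<in> Poly_Mapping.keys (emb p)"
  then obtain m where m: "m \<in> Poly_Mapping.keys p" "n = mon m" by (auto simp: keys_emb)
  then have "Poly_Mapping.keys m \<subseteq> Yl" using assms unfolding poly_in_def by blast
  then show "Poly_Mapping.keys n \<subseteq> \<rho> ` Yl" using m by (auto simp: keys_mon)
qed

lemma poly_in_T: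
  assumes WY: "W \<inter> range \<rho> = \<rho> ` Yl" and p: "poly_in W p"
  shows "poly_in Yl (T \<mu> p)"
  unfolding poly_in_def
proof (intro ballI subsetI)
  fix m u assume m: "m \<in> Poly_Mapping.keys (T \<mu> p)" and u: "u \<in> Poly_Mapping.keys m"
  have "\<mu> + mon m \<in> Poly_Mapping.keys p" using m by (simp add: in_keys_iff lookup_T)
  then have K: "Poly_Mapping.keys (\<mu> + mon m) \<subseteq> W" using p unfolding poly_in_def by blast
  have "Poly_Mapping.lookup (\<mu> + mon m) (\<rho> u) \<noteq> 0" using u by (simp add: lookup_add in_keys_iff)
  then have "\<rho> u \<in> W" using K by (auto simp: in_keys_iff)
  then have "\<rho> u \<in> \<rho> ` Yl" using WY by auto
  then show "u \<in> Yl" using inj_rho by (auto dest: injD)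
qed

definition ext :: "('u \<Rightarrow> ('u, 'k::comm_ring_1) mpoly) \<Rightarrow> 'w \<Rightarrow> ('w, 'k) mpoly" where
  "ext b = (\<lambda>w. if w \<in> range \<rho> then emb (b (inv \<rho> w)) else 0)"

lemma ext_rho [simp]: "ext b (\<rho> u) = emb (b u)"
  unfolding ext_def using inj_rho by simp

lemma ext_notin: "w \<notin> range \<rho> \<Longrightarrow> ext b w = 0"
  unfolding ext_def by simp

lemma flat_free:
  fixes W :: "'w set" and Yl :: "'u set" and Al :: "('u \<Rightarrow> 'k::field) set" and Ag :: "('w \<Rightarrow> 'k) set"
  assumes finW: "finite W" and finY: "finite Yl"
    and WY: "W \<inter> range \<rho> = \<rho> ` Yl"
    and corr1: "\<forall>a'\<in>Ag. \<exists>a\<in>Al. \<forall>u\<in>Yl. a' (\<rho> u) = a u"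
    and corr2: "\<forall>a\<in>Al. \<exists>a'\<in>Ag. \<forall>u\<in>Yl. a' (\<rho> u) = a u"
    and van: "vanish W (\<rho> ` Yl) Ag"
    and free: "free_mod Yl (LD Yl Yl Al)"
  shows "free_mod W (LD W (\<rho> ` Yl) Ag)"
proof -
  let ?L = "LD Yl Yl Al" and ?M = "LD W (\<rho> ` Yl) Ag"
  have sub: "\<rho> ` Yl \<subseteq> W" by (metis WY inf_le1)
  obtain Bl where Bl: "finite Bl" "Bl \<subseteq> ?L"
    and uB: "\<forall>\<theta>\<in>?L. \<exists>!c. (\<forall>b\<in>Bl. poly_in Yl (c b)) \<and> (\<forall>b. b \<notin> Bl \<longrightarrow> c b = 0) \<and> \<theta> = (\<lambda>w. \<Sum>b\<in>Bl. c b * b w)"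
    using free by (rule free_mod_obtain)
  have vanA: "\<forall>w\<in>W. w \<notin> \<rho> ` Yl \<longrightarrow> a' w = 0" if "a' \<in> Ag" for a'
    using van that unfolding vanish_def by blast
  have bz: "b u = 0" if "b \<in> ?L" "u \<notin> Yl" for b u using that by (simp add: LD_def)
  have bp: "poly_in Yl (b u)" if "b \<in> ?L" "u \<in> Yl" for b u using that by (simp add: LD_def is_der_def)
  have rhoW: "\<rho> u \<in> W \<longleftrightarrow> u \<in> Yl" for u
  proof
    assume "\<rho> u \<in> W"
    then have "\<rho> u \<in> \<rho> ` Yl" using WY by (metis IntI rangeI)
    then show "u \<in> Yl" using inj_rho by (metis image_iff injD)
  next
    assume "u \<in> Yl" then show "\<rho> u \<in> W" using sub by blast
  qed
  show ?thesis
  proof (rule free_mod_idx[of Bl ext ?M W])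
    show "finite Bl" by (rule Bl(1))
  next
    fix b assume b: "b \<in> Bl"
    then have bL: "b \<in> ?L" using Bl by auto
    show "ext b \<in> ?M"
      unfolding LD_def
    proof (intro CollectI conjI allI impI ballI)
      show "is_der W (ext b)"
        unfolding is_der_def
      proof (intro conjI ballI allI impI)
        fix w assume "w \<in> W"
        show "poly_in W (ext b w)"
        proof (cases "w \<in> range \<rho>")
          case True
          then obtain u where u: "w = \<rho> u" by auto
          show ?thesis
          proof (cases "u \<in> Yl")
            case True
            then show ?thesis using u bp[OF bL True] sub by (auto intro: poly_in_mono poly_in_emb)
          next
            case False
            then show ?thesis using u bz[OF bL False] by simp
          qed
        qed (simp add: ext_notin)
      next
        fix w assume "w \<notin> W"
        then show "ext b w = 0"
          using rhoW bz[OF bL] by (cases "w \<in> range \<rho>") (auto simp: ext_notin)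
      qed
      fix w assume w: "w \<notin> \<rho> ` Yl"
      show "ext b w = 0"
      proof (cases "w \<in> range \<rho>")
        case True
        then obtain x where x: "w = \<rho> x" by auto
        then have "x \<notin> Yl" using w by blast
        then show ?thesis using x bz[OF bL] by simp
      qed (simp add: ext_notin)
    next
      fix a' assume a': "a' \<in> Ag"
      then obtain a where a: "a \<in> Al" "\<forall>u\<in>Yl. a' (\<rho> u) = a u" using corr1 by blast
      obtain q where q: "poly_in Yl q" "der_apply Yl b a = lin_poly Yl a * q"
        using bL a(1) unfolding LD_def by blast
      have "der_apply W (ext b) a' = (\<Sum>u\<in>Yl. const_poly (a u) * emb (b u))"
        using der_apply_corr[OF finW sub a(2) vanA[OF a']] by simp
      also have "\<dots> = emb (der_apply Yl b a)"
        unfolding der_apply_def by (simp add: emb_sum emb_mult emb_const)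
      also have "\<dots> = lin_poly W a' * emb q"
        using q(2) lin_poly_corr[OF finW sub a(2) vanA[OF a']] by (simp add: emb_mult)
      finally show "\<exists>q. poly_in W q \<and> der_apply W (ext b) a' = lin_poly W a' * q"
        using poly_in_mono[OF poly_in_emb[OF q(1)] sub] by blast
    qed
  next
    fix \<theta> assume th: "\<theta> \<in> ?M"
    have thz: "\<theta> w = 0" if "w \<notin> \<rho> ` Yl" for w using th that by (simp add: LD_def)
    have thp: "poly_in W (\<theta> w)" if "w \<in> W" for w using th that by (simp add: LD_def is_der_def)
    define U where "U = (\<Union>u\<in>Yl. outer ` Poly_Mapping.keys (\<theta> (\<rho> u)))"
    have finU: "finite U" unfolding U_def using finY by simp
    have UO: "U \<subseteq> OUT" unfolding U_def using outer_OUT by auto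
    define th' where "th' \<mu> = (\<lambda>u. if u \<in> Yl then T \<mu> (\<theta> (\<rho> u)) else 0)" for \<mu>
    have th'L: "th' \<mu> \<in> ?L" if mu: "\<mu> \<in> OUT" for \<mu>
      unfolding LD_def
    proof (intro CollectI conjI allI impI ballI)
      show "is_der Yl (th' \<mu>)"
        unfolding is_der_def th'_def using thp rhoW by (auto intro: poly_in_T[OF WY])
      show "u \<notin> Yl \<Longrightarrow> th' \<mu> u = 0" for u by (simp add: th'_def)
      fix a assume a: "a \<in> Al"
      then obtain a' where a': "a' \<in> Ag" "\<forall>u\<in>Yl. a' (\<rho> u) = a u" using corr2 by blast
      obtain q where q: "poly_in W q" "der_apply W \<theta> a' = lin_poly W a' * q"
        using th a'(1) unfolding LD_def by blast
      have "der_apply Yl (th' \<mu>) a = (\<Sum>u\<in>Yl. const_poly (a u) * T \<mu> (\<theta> (\<rho> u)))"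
        unfolding der_apply_def th'_def by simp
      also have "\<dots> = T \<mu> (\<Sum>u\<in>Yl. const_poly (a u) * \<theta> (\<rho> u))"
        by (simp add: T_sum T_const_mult[OF mu])
      also have "\<dots> = T \<mu> (der_apply W \<theta> a')"
        using der_apply_corr[OF finW sub a'(2) vanA[OF a'(1)]] by simp
      also have "\<dots> = lin_poly Yl a * T \<mu> q"
        using q(2) lin_poly_corr[OF finW sub a'(2) vanA[OF a'(1)]] by (simp add: T_emb_mult[OF mu])
      finally show "\<exists>q. poly_in Yl q \<and> der_apply Yl (th' \<mu>) a = lin_poly Yl a * q"
        using poly_in_T[OF WY q(1)] by blast
    qed
    have "\<exists>c. \<mu> \<in> OUT \<longrightarrow> (\<forall>b\<in>Bl. poly_in Yl (c b)) \<and> th' \<mu> = (\<lambda>w. \<Sum>b\<in>Bl. c b * b w)" for \<mu>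
    proof (cases "\<mu> \<in> OUT")
      case True
      obtain c where "(\<forall>b\<in>Bl. poly_in Yl (c b)) \<and> (\<forall>b. b \<notin> Bl \<longrightarrow> c b = 0) \<and> th' \<mu> = (\<lambda>w. \<Sum>b\<in>Bl. c b * b w)"
        using uB th'L[OF True] by (rule rep_obtain) blast
      then show ?thesis by blast
    qed simp
    then have "\<exists>cf. \<forall>\<mu>. \<mu> \<in> OUT \<longrightarrow> (\<forall>b\<in>Bl. poly_in Yl (cf \<mu> b)) \<and> th' \<mu> = (\<lambda>w. \<Sum>b\<in>Bl. cf \<mu> b * b w)"
      by (intro choice allI)
    then obtain cf where cf0: "\<forall>\<mu>. \<mu> \<in> OUT \<longrightarrow> (\<forall>b\<in>Bl. poly_in Yl (cf \<mu> b)) \<and> th' \<mu> = (\<lambda>w. \<Sum>b\<in>Bl. cf \<mu> b * b w)"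
      by (elim exE)
    have cf: "(\<forall>b\<in>Bl. poly_in Yl (cf \<mu> b)) \<and> th' \<mu> = (\<lambda>w. \<Sum>b\<in>Bl. cf \<mu> b * b w)" if "\<mu> \<in> OUT" for \<mu>
      using cf0 that by blast
    define a where "a b = (\<Sum>\<mu>\<in>U. Poly_Mapping.single \<mu> 1 * emb (cf \<mu> b))" for b
    show "\<exists>a. (\<forall>i\<in>Bl. poly_in W (a i)) \<and> \<theta> = (\<lambda>w. \<Sum>i\<in>Bl. a i * ext i w)"
    proof (intro exI[of _ a] conjI ballI)
      fix b assume b: "b \<in> Bl"
      show "poly_in W (a b)"
        unfolding a_def
      proof (intro poly_in_sum poly_in_mult)
        fix \<mu> assume mu: "\<mu> \<in> U"
        then obtain u n where un: "u \<in> Yl" "n \<in> Poly_Mapping.keys (\<theta> (\<rho> u))" "\<mu> = outer n"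
          unfolding U_def by blast
        have "poly_in W (\<theta> (\<rho> u))" using thp rhoW un(1) by blast
        then have "Poly_Mapping.keys n \<subseteq> W" using un(2) unfolding poly_in_def by blast
        then show "poly_in W (Poly_Mapping.single \<mu> 1)"
          using un(3) keys_outer by (intro poly_in_single) blast
        show "poly_in W (emb (cf \<mu> b))"
        proof -
          have "\<mu> \<in> OUT" using mu UO by blast
          then have "poly_in Yl (cf \<mu> b)" using cf b by blast
          then show ?thesis using poly_in_mono[OF poly_in_emb sub] by blast
        qed
      qed
    next
      show "\<theta> = (\<lambda>w. \<Sum>i\<in>Bl. a i * ext i w)"
      proof
        fix w
        show "\<theta> w = (\<Sum>i\<in>Bl. a i * ext i w)"
        proof (cases "w \<in> \<rho> ` Yl")
          case True
          then obtain u where u: "u \<in> Yl" "w = \<rho> u" by auto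
          have "(\<Sum>i\<in>Bl. a i * ext i w) = (\<Sum>i\<in>Bl. \<Sum>\<mu>\<in>U. Poly_Mapping.single \<mu> 1 * emb (cf \<mu> i * i u))"
            unfolding a_def u(2) by (simp add: sum_distrib_right emb_mult mult.assoc)
          also have "\<dots> = (\<Sum>\<mu>\<in>U. Poly_Mapping.single \<mu> 1 * emb (\<Sum>i\<in>Bl. cf \<mu> i * i u))"
            by (subst sum.swap) (simp add: emb_sum sum_distrib_left)
          also have "\<dots> = (\<Sum>\<mu>\<in>U. Poly_Mapping.single \<mu> 1 * emb (th' \<mu> u))"
          proof (intro sum.cong refl)
            fix \<mu> assume "\<mu> \<in> U"
            then have "th' \<mu> = (\<lambda>w. \<Sum>b\<in>Bl. cf \<mu> b * b w)" using cf UO by blast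
            then show "Poly_Mapping.single \<mu> 1 * emb (\<Sum>i\<in>Bl. cf \<mu> i * i u) = Poly_Mapping.single \<mu> 1 * emb (th' \<mu> u)"
              by simp
          qed
          also have "\<dots> = (\<Sum>\<mu>\<in>U. Poly_Mapping.single \<mu> 1 * emb (T \<mu> (\<theta> (\<rho> u))))"
            using u(1) by (simp add: th'_def)
          also have "\<dots> = \<theta> (\<rho> u)"
            using finU UO u(1) by (intro T_expand[symmetric]) (auto simp: U_def)
          finally show ?thesis using u by simp
        next
          case False
          have "ext i w = 0" if "i \<in> Bl" for i
          proof (cases "w \<in> range \<rho>")
            case True
            then obtain u where u: "w = \<rho> u" by auto
            then have "u \<notin> Yl" using False by auto
            moreover have "i \<in> ?L" using that Bl(2) by blast
            ultimately have "i u = 0" using \<open>u \<notin> Yl\<close> by (intro bz)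
            then show ?thesis using u by simp
          qed (simp add: ext_notin)
          then show ?thesis using thz[OF False] by simp
        qed
      qed
    qed
  next
    fix d assume dp: "\<forall>i\<in>Bl. poly_in W (d i)" and d0: "\<forall>w. (\<Sum>i\<in>Bl. d i * ext i w) = 0"
    have T0: "T \<mu> (d b) = 0" if mu: "\<mu> \<in> OUT" and b: "b \<in> Bl" for \<mu> b
    proof -
      have "\<forall>b\<in>Bl. T \<mu> (d b) = 0"
      proof (rule free_mod_unique0[OF Bl uB LD_zero])
        show "\<forall>b\<in>Bl. poly_in Yl (T \<mu> (d b))" using dp poly_in_T[OF WY] by blast
        show "\<forall>u. (\<Sum>b\<in>Bl. T \<mu> (d b) * b u) = 0"
        proof
          fix u
          show "(\<Sum>b\<in>Bl. T \<mu> (d b) * b u) = 0"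
          proof (cases "u \<in> Yl")
            case True
            have "(\<Sum>b\<in>Bl. T \<mu> (d b) * b u) = T \<mu> (\<Sum>b\<in>Bl. d b * ext b (\<rho> u))"
              by (simp add: T_sum T_mult_emb[OF mu])
            also have "\<dots> = 0" using d0[rule_format, of "\<rho> u"] by simp
            finally show ?thesis .
          next
            case False
            then have "\<forall>b\<in>Bl. b u = 0" using bz Bl(2) by blast
            then show ?thesis by (intro sum.neutral) (metis mult_zero_right)
          qed
        qed
      qed
      then show ?thesis using b by blast
    qed
    show "\<forall>i\<in>Bl. d i = 0"
    proof
      fix b assume b: "b \<in> Bl"
      have "d b = (\<Sum>\<mu>\<in>outer ` Poly_Mapping.keys (d b). Poly_Mapping.single \<mu> 1 * emb (T \<mu> (d b)))"
        using outer_OUT by (intro T_expand) auto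
      also have "\<dots> = 0"
      proof (intro sum.neutral ballI)
        fix \<mu> assume "\<mu> \<in> outer ` Poly_Mapping.keys (d b)"
        then have "\<mu> \<in> OUT" using outer_OUT by blast
        then have "T \<mu> (d b) = 0" using T0 b by blast
        then show "Poly_Mapping.single \<mu> 1 * emb (T \<mu> (d b)) = 0" by simp
      qed
      finally show "d b = 0" .
    qed
  qed
qed

end



lemma base_free:
  fixes W :: "'w option set"
  assumes finW: "finite W" and NW: "None \<in> W"
  shows "free_mod W (LD W {None} {x0form :: _ \<Rightarrow> 'k::field})"
proof -
  let ?M = "LD W {None} {x0form :: _ \<Rightarrow> 'k}"
  have van: "vanish W {None} {x0form :: _ \<Rightarrow> 'k}" by (simp add: vanish_def x0form_def)
  have E: "(eul {None} :: _ \<Rightarrow> ('w option, 'k) mpoly) \<in> ?M"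
    using finW NW van by (intro eul_LD) auto
  show ?thesis
  proof (rule free_mod_idx[of "{()}" "\<lambda>_. eul {None}" ?M W])
    show "finite {()}" by simp
    show "\<And>i. i \<in> {()} \<Longrightarrow> eul {None} \<in> ?M" using E by simp
  next
    fix \<theta> assume th: "\<theta> \<in> ?M"
    have p: "\<theta> None = var None * phi \<theta>" "poly_in W (phi \<theta>)" using LD_phi[OF th _ finW NW] by auto
    have z: "\<theta> w = 0" if "w \<noteq> None" for w using th that by (simp add: LD_def)
    show "\<exists>a. (\<forall>i\<in>{()}. poly_in W (a i)) \<and> \<theta> = (\<lambda>w. \<Sum>i\<in>{()}. a i * eul {None} w)"
    proof (intro exI[of _ "\<lambda>_. phi \<theta>"] conjI ballI ext)
      show "poly_in W (phi \<theta>)" for i using p by simp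
      fix w show "\<theta> w = (\<Sum>i\<in>{()}. phi \<theta> * eul {None} w)"
        using p z by (cases "w = None") (auto simp: eul_def mult.commute)
    qed
  next
    fix a :: "unit \<Rightarrow> ('w option, 'k) mpoly"
    assume "\<forall>w. (\<Sum>i\<in>{()}. a i * eul {None} w) = 0"
    then have "(\<Sum>i\<in>{()}. a i * eul {None} None) = 0" by blast
    then have "a () * var None = 0" by (simp add: eul_def)
    then have "Poly_Mapping.single (Poly_Mapping.single None 1) 1 * a () = Poly_Mapping.single (Poly_Mapping.single None 1) 1 * 0"
      by (simp add: var_def mult.commute)
    then have "a () = 0" by (rule single_mult_cancel)
    then show "\<forall>i\<in>{()}. a i = 0" by simp
  qed
qed

definition YJ :: "(nat \<Rightarrow> 'v set) \<Rightarrow> nat set \<Rightarrow> (nat \<times> 'v) option set" where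
  "YJ X J = insert None (Some ` {(i, v). i \<in> J \<and> v \<in> X i})"

definition gform :: "nat \<Rightarrow> (('v \<Rightarrow> 'k::comm_ring_1) \<times> 'k) \<Rightarrow> (nat \<times> 'v) option \<Rightarrow> 'k" where
  "gform i h = (\<lambda>u. case u of None \<Rightarrow> - snd h | Some (j, v) \<Rightarrow> if j = i then fst h v else 0)"

definition HJ :: "(nat \<Rightarrow> (('v \<Rightarrow> 'k::comm_ring_1) \<times> 'k) set) \<Rightarrow> nat set \<Rightarrow> ((nat \<times> 'v) option \<Rightarrow> 'k) set" where
  "HJ A J = insert x0form (\<Union>i\<in>J. gform i ` A i)"

lemma YJ_union: "YJ X (J1 \<union> J2) = YJ X J1 \<union> YJ X J2"
  unfolding YJ_def by auto

lemma HJ_union: "HJ A (J1 \<union> J2) = HJ A J1 \<union> HJ A J2"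
  unfolding HJ_def by auto

lemma YJ_mono: "J1 \<subseteq> J2 \<Longrightarrow> YJ X J1 \<subseteq> YJ X J2"
  unfolding YJ_def by auto

lemma finite_YJ: "finite J \<Longrightarrow> (\<forall>i\<in>J. finite (X i)) \<Longrightarrow> finite (YJ X J)"
proof -
  assume J: "finite J" "\<forall>i\<in>J. finite (X i)"
  have "{(i, v). i \<in> J \<and> v \<in> X i} = (SIGMA i:J. X i)" by auto
  then have "finite {(i, v). i \<in> J \<and> v \<in> X i}" using J by simp
  then show ?thesis unfolding YJ_def by simp
qed

lemma vanish_HJ:
  fixes A :: "nat \<Rightarrow> (('v \<Rightarrow> 'k::comm_ring_1) \<times> 'k) set"
  assumes "J \<subseteq> K"
  shows "vanish (YJ X K) (YJ X J) (HJ A J)"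
  unfolding vanish_def
proof (intro ballI impI)
  fix a w assume a: "a \<in> HJ A J" and w: "w \<in> YJ X K" "w \<notin> YJ X J"
  then obtain i v where iv: "w = Some (i, v)" "i \<in> K" "v \<in> X i" "i \<notin> J" unfolding YJ_def by auto
  show "a w = 0"
  proof (cases "a = x0form")
    case True then show ?thesis using iv by (simp add: x0form_def)
  next
    case False
    then obtain i' h where "i' \<in> J" "a = gform i' h" using a unfolding HJ_def by auto
    then show ?thesis using iv by (auto simp: gform_def)
  qed
qed

lemma cone_dsum: "cone (dsum k A) = HJ A {..<k}"
proof -
  have "(\<lambda>(\<alpha>, c). \<lambda>u. case u of None \<Rightarrow> - c | Some v \<Rightarrow> \<alpha> v) ((\<lambda>(\<alpha>, c). (\<lambda>(j, v). if j = i then \<alpha> v else 0, c)) h) = gform i h"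
    for i :: nat and h :: "('a \<Rightarrow> 'b::comm_ring_1) \<times> 'b"
    by (cases h) (auto simp: gform_def split: option.splits)
  then show ?thesis
    unfolding cone_def dsum_def HJ_def x0form_def image_UN image_image by simp
qed

theorem mainTheorem10:
  fixes k :: nat
    and X :: "nat \<Rightarrow> 'v set"
    and A :: "nat \<Rightarrow> (('v \<Rightarrow> 'k::field) \<times> 'k) set"
  assumes "\<forall>i<k. finite (X i)"
    and "\<forall>i<k. aff_arr (X i) (A i)"
    and "\<forall>i<k. free_arr (cone_vars (X i)) (cone (A i))"
  shows "free_arr (cone_vars (dsum_vars k X)) (cone (dsum k A))"
proof -
  define W where "W = YJ X {..<k}"
  have Weq: "cone_vars (dsum_vars k X) = W"
    unfolding W_def YJ_def cone_vars_def dsum_vars_def by auto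
  have finW: "finite W" unfolding W_def using assms(1) by (intro finite_YJ) auto
  have NW: "None \<in> W" by (simp add: W_def YJ_def)
  have x0H: "x0form \<in> HJ A J" for J by (simp add: HJ_def)
  have NY: "None \<in> YJ X J" for J by (simp add: YJ_def)
  have flat: "free_mod W (LD W (YJ X {j}) (HJ A {j}))" if j: "j < k" for j
  proof -
    define \<rho> where "\<rho> = map_option (\<lambda>v::'v. (j, v))"
    have inj: "inj \<rho>" unfolding \<rho>_def by (intro option.inj_map) (auto intro: injI)
    interpret renaming \<rho> by (unfold_locales) (rule inj)
    let ?Yl = "cone_vars (X j)"
    have img: "\<rho> ` ?Yl = YJ X {j}" unfolding \<rho>_def cone_vars_def YJ_def by (force simp: image_image)
    have "free_mod W (LD W (\<rho> ` ?Yl) (HJ A {j}))"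
    proof (rule flat_free)
      show "finite W" by (rule finW)
      show "finite ?Yl" using assms(1) j by (simp add: cone_vars_def)
      show "W \<inter> range \<rho> = \<rho> ` ?Yl"
      proof
        show "W \<inter> range \<rho> \<subseteq> \<rho> ` ?Yl"
        proof
          fix w assume w: "w \<in> W \<inter> range \<rho>"
          then obtain x where x: "w = \<rho> x" by auto
          show "w \<in> \<rho> ` ?Yl"
          proof (cases x)
            case None
            then show ?thesis using x by (simp add: cone_vars_def)
          next
            case (Some v)
            then have "w = Some (j, v)" using x by (simp add: \<rho>_def)
            then have "v \<in> X j" using w by (auto simp: W_def YJ_def)
            then show ?thesis using x Some by (simp add: cone_vars_def)
          qed
        qed
        show "\<rho> ` ?Yl \<subseteq> W \<inter> range \<rho>"
        proof -
          have "\<rho> ` ?Yl \<subseteq> W" using img YJ_mono[of "{j}" "{..<k}" X] j unfolding W_def by auto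
          moreover have "\<rho> ` ?Yl \<subseteq> range \<rho>" by blast
          ultimately show ?thesis by blast
        qed
      qed
      show "\<forall>a'\<in>HJ A {j}. \<exists>a\<in>cone (A j). \<forall>u\<in>?Yl. a' (\<rho> u) = a u"
      proof
        fix a' assume "a' \<in> HJ A {j}"
        then consider "a' = x0form" | h where "h \<in> A j" "a' = gform j h" unfolding HJ_def by auto
        then show "\<exists>a\<in>cone (A j). \<forall>u\<in>?Yl. a' (\<rho> u) = a u"
        proof cases
          case 1
          show ?thesis
            by (rule bexI[of _ "\<lambda>u. if u = None then 1 else 0"])
              (auto simp: 1 x0form_def \<rho>_def cone_def)
        next
          case 2
          obtain \<alpha> c where h: "h = (\<alpha>, c)" by (cases h)
          show ?thesis
            by (rule bexI[of _ "\<lambda>u. case u of None \<Rightarrow> - c | Some v \<Rightarrow> \<alpha> v"])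
              (use 2 h in \<open>auto simp: gform_def \<rho>_def cone_def split: option.splits\<close>)
        qed
      qed
      show "\<forall>a\<in>cone (A j). \<exists>a'\<in>HJ A {j}. \<forall>u\<in>?Yl. a' (\<rho> u) = a u"
      proof
        fix a assume "a \<in> cone (A j)"
        then consider "a = (\<lambda>u. if u = None then 1 else 0)" | \<alpha> c where "(\<alpha>, c) \<in> A j" "a = (\<lambda>u. case u of None \<Rightarrow> - c | Some v \<Rightarrow> \<alpha> v)"
          unfolding cone_def by auto
        then show "\<exists>a'\<in>HJ A {j}. \<forall>u\<in>?Yl. a' (\<rho> u) = a u"
        proof cases
          case 1
          show ?thesis
            by (rule bexI[of _ x0form]) (auto simp: 1 x0form_def \<rho>_def HJ_def)
        next
          case 2
          show ?thesis
            by (rule bexI[of _ "gform j (\<alpha>, c)"])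
              (use 2 in \<open>auto simp: gform_def \<rho>_def HJ_def split: option.splits\<close>)
        qed
      qed
      show "vanish W (\<rho> ` ?Yl) (HJ A {j})"
        unfolding img W_def using j by (intro vanish_HJ) auto
      show "free_mod ?Yl (LD ?Yl ?Yl (cone (A j)))"
        using assms(3) j by (simp add: free_arr_free_mod log_ders_LD)
    qed
    then show ?thesis using img by simp
  qed
  have main: "free_mod W (LD W (YJ X {..<j}) (HJ A {..<j}))" if "j \<le> k" for j
    using that
  proof (induction j)
    case 0
    have "YJ X {..<0} = {None}" by (simp add: YJ_def)
    moreover have "HJ A {..<0} = {x0form}" by (simp add: HJ_def)
    ultimately show ?case using base_free[OF finW NW] by simp
  next
    case (Suc j)
    then have j: "j < k" by simp
    have "free_mod W (LD W (YJ X {..<j} \<union> YJ X {j}) (HJ A {..<j} \<union> HJ A {j}))"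
    proof (rule step_free)
      show "finite W" by (rule finW)
      show "YJ X {..<j} \<subseteq> W" unfolding W_def using j by (intro YJ_mono) auto
      show "YJ X {j} \<subseteq> W" unfolding W_def using j by (intro YJ_mono) auto
      show "None \<in> YJ X {..<j}" "None \<in> YJ X {j}" by (rule NY)+
      show "YJ X {..<j} \<inter> YJ X {j} \<subseteq> {None}" unfolding YJ_def by auto
      show "x0form \<in> HJ A {..<j}" "x0form \<in> HJ A {j}" by (rule x0H)+
      show "vanish W (YJ X {..<j}) (HJ A {..<j})" unfolding W_def using j by (intro vanish_HJ) auto
      show "vanish W (YJ X {j}) (HJ A {j})" unfolding W_def using j by (intro vanish_HJ) auto
      show "free_mod W (LD W (YJ X {..<j}) (HJ A {..<j}))" using Suc j by simp
      show "free_mod W (LD W (YJ X {j}) (HJ A {j}))" using flat j by simp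
    qed
    moreover have "{..<Suc j} = {..<j} \<union> {j}" by auto
    ultimately show ?case by (simp only: YJ_union HJ_union)
  qed
  have "free_mod W (LD W W (HJ A {..<k}))" using main[of k] by (simp add: W_def)
  then show ?thesis
    by (simp add: Weq free_arr_free_mod log_ders_LD cone_dsum)
qed


end
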